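(* Let $L^{p}_n \subset k[x_0, x_1, \dotsc , x_n]$ be any saturated lexicographic ideal, with minimal monomial generators $m_1, m_2, \dotsc, m_{n-(\ell+1)}$ listed in the order described in the context. (i) A minimal monomial generator $m \in L^{p}_n$ is expandable if and only if $m$ is the smallest minimal monomial generator of its degree in $L^{p}_n$. (ii) Let $m_{n-(\ell+1)}$ denote the last minimal monomial generator of $L^{p}_n$. If $m \neq m_{n-(\ell+1)}$ is any other expandable generator of $L^{p}_n$, and $(L^{p}_n)'$ is the expansion of $L^{p}_n$ at $m$, then every minimal monomial generator $g \in (L^{p}_n)'$ satisfies $\deg g < 1 + \deg m_{n-(\ell+1)}$. (iii) Moreover, in (ii), we have $\deg K_{L^{1+p}_n} > \deg K_{(L^{p}_n)'}$.
   Context: $k$ is an algebraically closed field and $k[x_0,\dotsc,x_n]$ is standard graded. $p$ is an admissible Hilbert polynomial with Macaulay--Hartshorne expression $p(t)=\sum_{i=0}^d \binom{t+i}{i+1}-\binom{t+i-e_i}{i+1}$, $e_0\ge\dotsb\ge e_d>0$, $d=\deg p$, and $n>d$. $L^{p}_n$ is the saturated lexicographic ideal in $k[x_0,\dotsc,x_n]$ with Hilbert polynomial $p$; setting $e_i:=0$ for $d<i\le n$ and $a_j:=e_j-e_{j+1}$, it is generated by $x_0,\dotsc,x_{n-(d+2)}$, $x_{n-(d+1)}^{a_d+1}$, $x_{n-(d+1)}^{a_d}x_{n-d}^{a_{d-1}+1}$, $\dotsc$, $x_{n-(d+1)}^{a_d}\dotsb x_{n-3}^{a_2}x_{n-2}^{a_1+1}$,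 $x_{n-(d+1)}^{a_d}\dotsb x_{n-2}^{a_1}x_{n-1}^{a_0}$. Its minimal generators $m_1,\dotsc,m_{n-(\ell+1)}$ are obtained from this list (in this order) by deleting the redundant ones, where $\ell$ is such that $a_0=\dotsb=a_\ell=0$ and $a_{\ell+1}>0$ (with $\ell=-1$ if $a_0\ne0$); the last one is $m_{n-(\ell+1)}=x_{n-(d+1)}^{a_d}x_{n-d}^{a_{d-1}}\dotsb x_{n-(\ell+2)}^{a_{\ell+1}}$, and $\deg m_j$ is maximized at $j=n-(\ell+1)$. For a saturated Borel ideal $I\subseteq k[x_0,\dotsc,x_n]$, a minimal monomial generator $g$ is expandable if $\{g x_{i+1}x_i^{-1} : x_i \mid g,\ 0\le i<n-1\}$ contains no minimal monomial generator of $I$; the expansion of $I$ at $g$ is $\langle I\setminus\langle g\rangle\rangle+\langle g x_j : \max g\le j\le n-1\rangle$, where $\max g$ is the largest index of a variable dividing $g$. $L^{1+p}_n$ is the lexicographic ideal with Hilbert polynomial $1+p$ (it equals the expansion of $L^{p}_n$ at $m_{n-(\ell+1)}$). For a homogeneous ideal $J$, $K_J$ denotes the $K$-polynomial of $k[x_0,\dotsc,x_n]/J$, i.e. the numerator of its Hilbert series written as $K_J(T)/(1-T)^{n+1}$. *)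

theory Defs
  imports "HOL-Computational_Algebra.Computational_Algebra"
begin

text \<open>Monomials of k[x_0,...,x_n] are represented by exponent vectors
  a :: nat => nat with a i = 0 for i > n.  Divisibility of monomials is the
  pointwise order on exponent vectors; monomial ideals are represented by
  their sets of monomials (a monomial ideal is determined by them).\<close>

definition monoms :: "nat \<Rightarrow> (nat \<Rightarrow> nat) set" where
  "monoms n = {a. \<forall>i. n < i \<longrightarrow> a i = 0}"

definition mdeg :: "nat \<Rightarrow> (nat \<Rightarrow> nat) \<Rightarrow> nat" where
  "mdeg n a = (\<Sum>i\<le>n. a i)"

definition var :: "nat \<Rightarrow> nat \<Rightarrow> nat" where
  "var j = (\<lambda>i. if i = j then 1 else 0)"

definition mideal :: "nat \<Rightarrow> (nat \<Rightarrow> nat) set \<Rightarrow> (nat \<Rightarrow> nat) set" where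
  "mideal n S = {a \<in> monoms n. \<exists>s\<in>S. s \<le> a}"

definition mingens :: "(nat \<Rightarrow> nat) set \<Rightarrow> (nat \<Rightarrow> nat) set" where
  "mingens I = {a \<in> I. \<forall>b\<in>I. b \<le> a \<longrightarrow> b = a}"

text \<open>Strict lexicographic order with x_0 > x_1 > ... > x_n:
  lex_less a b means a <_lex b.\<close>
definition lex_less :: "(nat \<Rightarrow> nat) \<Rightarrow> (nat \<Rightarrow> nat) \<Rightarrow> bool" where
  "lex_less a b \<longleftrightarrow> (\<exists>i. a i < b i \<and> (\<forall>j<i. a j = b j))"

text \<open>Macaulay--Hartshorne data: e_i for i <= d, extended by e_i = 0 for i > d;
  a_j = e_j - e_(j+1).\<close>
definition ee :: "nat \<Rightarrow> (nat \<Rightarrow> nat) \<Rightarrow> nat \<Rightarrow> nat" where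
  "ee d e i = (if i \<le> d then e i else 0)"

definition aa :: "nat \<Rightarrow> (nat \<Rightarrow> nat) \<Rightarrow> nat \<Rightarrow> nat" where
  "aa d e j = ee d e j - ee d e (Suc j)"

text \<open>Generator x_(n-(d+1))^(a_d) ... x_(n-(j+2))^(a_(j+1)) x_(n-(j+1))^(a_j+1), 1 <= j <= d.\<close>
definition lexgenG :: "nat \<Rightarrow> nat \<Rightarrow> (nat \<Rightarrow> nat) \<Rightarrow> nat \<Rightarrow> nat \<Rightarrow> nat" where
  "lexgenG n d e j = (\<lambda>v. if v = n - Suc j then aa d e j + 1
       else if (\<exists>i. j < i \<and> i \<le> d \<and> v = n - Suc i) then aa d e (n - Suc v) else 0)"

text \<open>Final generator x_(n-(d+1))^(a_d) ... x_(n-2)^(a_1) x_(n-1)^(a_0).\<close>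
definition lexgenF :: "nat \<Rightarrow> nat \<Rightarrow> (nat \<Rightarrow> nat) \<Rightarrow> nat \<Rightarrow> nat" where
  "lexgenF n d e = (\<lambda>v. if (\<exists>i. i \<le> d \<and> v = n - Suc i) then aa d e (n - Suc v) else 0)"

text \<open>The generating list of L^p_n in the order of the paper:
  x_0, ..., x_(n-(d+2)), then the generators for j = d, d-1, ..., 1, then the final one.\<close>
definition lexgens :: "nat \<Rightarrow> nat \<Rightarrow> (nat \<Rightarrow> nat) \<Rightarrow> (nat \<Rightarrow> nat) list" where
  "lexgens n d e = map var [0..<n - Suc d] @ map (lexgenG n d e) (rev [1..<Suc d]) @ [lexgenF n d e]"

definition LexIdeal :: "nat \<Rightarrow> nat \<Rightarrow> (nat \<Rightarrow> nat) \<Rightarrow> (nat \<Rightarrow> nat) set" where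
  "LexIdeal n d e = mideal n (set (lexgens n d e))"

definition lastgen :: "nat \<Rightarrow> nat \<Rightarrow> (nat \<Rightarrow> nat) \<Rightarrow> nat \<Rightarrow> nat" where
  "lastgen n d e = last (filter (\<lambda>g. g \<in> mingens (LexIdeal n d e)) (lexgens n d e))"

definition smallest_of_degree :: "nat \<Rightarrow> (nat \<Rightarrow> nat) set \<Rightarrow> (nat \<Rightarrow> nat) \<Rightarrow> bool" where
  "smallest_of_degree n I m \<longleftrightarrow> m \<in> mingens I \<and>
     (\<forall>g\<in>mingens I. mdeg n g = mdeg n m \<longrightarrow> g \<noteq> m \<longrightarrow> lex_less m g)"

definition expandable :: "nat \<Rightarrow> (nat \<Rightarrow> nat) set \<Rightarrow> (nat \<Rightarrow> nat) \<Rightarrow> bool" where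
  "expandable n I g \<longleftrightarrow> g \<in> mingens I \<and>
     (\<forall>i. i + 1 < n \<longrightarrow> 0 < g i \<longrightarrow>
        (g(i := g i - 1, Suc i := g (Suc i) + 1)) \<notin> mingens I)"

definition mmax :: "nat \<Rightarrow> (nat \<Rightarrow> nat) \<Rightarrow> nat" where
  "mmax n g = Max {i. i \<le> n \<and> 0 < g i}"

text \<open>Expansion of I at g:  <I \ <g>> + <g x_j : max g <= j <= n-1>
  (I \ <g> taken as the set of monomials of I not divisible by g).\<close>
definition expansion :: "nat \<Rightarrow> (nat \<Rightarrow> nat) set \<Rightarrow> (nat \<Rightarrow> nat) \<Rightarrow> (nat \<Rightarrow> nat) set" where
  "expansion n I g = mideal n ((I - mideal n {g}) \<union>
      {g(j := g j + 1) | j. mmax n g \<le> j \<and> j \<le> n - 1})"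

definition hilb :: "nat \<Rightarrow> (nat \<Rightarrow> nat) set \<Rightarrow> nat \<Rightarrow> nat" where
  "hilb n J t = card {a \<in> monoms n. mdeg n a = t \<and> a \<notin> J}"

definition Kfps :: "nat \<Rightarrow> (nat \<Rightarrow> nat) set \<Rightarrow> int fps" where
  "Kfps n J = Abs_fps (\<lambda>t. int (hilb n J t)) * (1 - fps_X) ^ (n + 1)"

definition Kpoly :: "nat \<Rightarrow> (nat \<Rightarrow> nat) set \<Rightarrow> int poly" where
  "Kpoly n J = (THE q. fps_of_poly q = Kfps n J)"

end

theory Submission
  imports Defs "HOL-Library.FuncSet"
begin
lemma finite_bounded_monoms: "finite {w::nat\<Rightarrow>nat. \<forall>i. w i \<le> t \<and> (n < i \<longrightarrow> w i = 0)}"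
proof -
  have "{w::nat\<Rightarrow>nat. \<forall>i. w i \<le> t \<and> (n < i \<longrightarrow> w i = 0)}
     \<subseteq> (\<lambda>f i. if i \<le> n then f i else 0) ` ({..n} \<rightarrow>\<^sub>E {..t})"
  proof
    fix w :: "nat \<Rightarrow> nat" assume w: "w \<in> {w. \<forall>i. w i \<le> t \<and> (n < i \<longrightarrow> w i = 0)}"
    have "w = (\<lambda>i. if i \<le> n then restrict w {..n} i else 0)"
      using w by (auto simp: fun_eq_iff)
    moreover have "restrict w {..n} \<in> {..n} \<rightarrow>\<^sub>E {..t}" using w by auto
    ultimately show "w \<in> (\<lambda>f i. if i \<le> n then f i else 0) ` ({..n} \<rightarrow>\<^sub>E {..t})" by blast
  qed
  then show ?thesis by (rule finite_subset) (auto intro: finite_PiE)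
qed

lemma mdeg_add: "mdeg n (\<lambda>i. a i + b i) = mdeg n a + mdeg n b"
  by (simp add: mdeg_def sum.distrib)

lemma monoms_le_mdeg: "w \<in> monoms n \<Longrightarrow> w i \<le> mdeg n w"
  unfolding monoms_def mdeg_def
  by (cases "i \<le> n") (auto intro: member_le_sum)

definition W :: "nat \<Rightarrow> nat \<Rightarrow> nat \<Rightarrow> (nat \<Rightarrow> nat) set" where
  "W n a t = {w \<in> monoms n. (\<forall>p<a. w p = 0) \<and> mdeg n w = t}"

lemma finite_W: "finite (W n a t)"
  by (rule finite_subset[OF _ finite_bounded_monoms[of t n]])
     (auto simp: W_def monoms_le_mdeg, auto simp: monoms_def)

lemma finite_deg_monoms: "finite {w \<in> monoms n. mdeg n w = t}"
  by (rule finite_subset[OF _ finite_bounded_monoms[of t n]])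
     (auto simp: monoms_le_mdeg, auto simp: monoms_def)

lemma W_top: "W n (Suc n) t = (if t = 0 then {(\<lambda>_. 0)} else {})"
proof -
  have "w \<in> W n (Suc n) t \<longleftrightarrow> w = (\<lambda>_. 0) \<and> t = 0" for w
  proof
    assume w: "w \<in> W n (Suc n) t"
    have "w i = 0" for i using w by (cases "i \<le> n") (auto simp: W_def monoms_def)
    then show "w = (\<lambda>_. 0) \<and> t = 0" using w by (auto simp: W_def mdeg_def)
  qed (auto simp: W_def monoms_def mdeg_def)
  then show ?thesis by auto
qed

lemma W_rec:
  assumes "a \<le> n" "0 < t"
  shows "W n a t = W n (Suc a) t \<union> (\<lambda>w. w(a := Suc (w a))) ` W n a (t - 1)"
    and "W n (Suc a) t \<inter> (\<lambda>w. w(a := Suc (w a))) ` W n a (t - 1) = {}"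
proof -
  have deg_upd: "mdeg n (w(a := Suc (w a))) = Suc (mdeg n w)" for w
  proof -
    have "mdeg n (w(a := Suc (w a))) = (\<Sum>i\<le>n. w i + (if i = a then 1 else 0))"
      unfolding mdeg_def by (rule sum.cong) auto
    also have "\<dots> = mdeg n w + 1" using assms(1)
      by (simp add: mdeg_def sum.distrib)
    finally show ?thesis by simp
  qed
  show "W n a t = W n (Suc a) t \<union> (\<lambda>w. w(a := Suc (w a))) ` W n a (t - 1)"
  proof (intro equalityI subsetI)
    fix w assume w: "w \<in> W n a t"
    show "w \<in> W n (Suc a) t \<union> (\<lambda>w. w(a := Suc (w a))) ` W n a (t - 1)"
    proof (cases "w a = 0")
      case True
      then have "w \<in> W n (Suc a) t" using w by (auto simp: W_def less_Suc_eq)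
      then show ?thesis by blast
    next
      case False
      define v where "v = w(a := w a - 1)"
      have "w = v(a := Suc (v a))" using False by (auto simp: v_def fun_eq_iff)
      moreover have "v \<in> W n a (t - 1)"
      proof -
        have "mdeg n w = Suc (mdeg n v)" using deg_upd[of v] \<open>w = _\<close> by simp
        then show ?thesis using w assms by (auto simp: W_def v_def monoms_def)
      qed
      ultimately show ?thesis by blast
    qed
  next
    fix w assume "w \<in> W n (Suc a) t \<union> (\<lambda>w. w(a := Suc (w a))) ` W n a (t - 1)"
    then show "w \<in> W n a t"
    proof
      assume "w \<in> W n (Suc a) t" then show ?thesis by (auto simp: W_def)
    next
      assume "w \<in> (\<lambda>w. w(a := Suc (w a))) ` W n a (t - 1)"
      then obtain v where v: "v \<in> W n a (t - 1)" "w = v(a := Suc (v a))" by blast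
      then show ?thesis using deg_upd[of v] assms by (auto simp: W_def monoms_def)
    qed
  qed
  show "W n (Suc a) t \<inter> (\<lambda>w. w(a := Suc (w a))) ` W n a (t - 1) = {}"
    by (auto simp: W_def)
qed

lemma card_W_rec:
  assumes "a \<le> n" "0 < t"
  shows "card (W n a t) = card (W n (Suc a) t) + card (W n a (t - 1))"
proof -
  have inj: "inj_on (\<lambda>w. w(a := Suc (w a))) (W n a (t - 1))"
  proof (rule inj_onI)
    fix x y :: "nat \<Rightarrow> nat" assume "x(a := Suc (x a)) = y(a := Suc (y a))"
    then have h: "\<And>i. (x(a := Suc (x a))) i = (y(a := Suc (y a))) i" by simp
    show "x = y"
    proof
      fix i show "x i = y i" using h[of i] by (cases "i = a") auto
    qed
  qed
  show ?thesis
    using W_rec[OF assms] card_Un_disjoint[OF finite_W finite_imageI[OF finite_W]]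
      card_image[OF inj] by simp
qed

lemma card_W_0: "card (W n a 0) = 1"
proof -
  have "W n a 0 = {(\<lambda>_. 0)}"
  proof (intro equalityI subsetI)
    fix w assume w: "w \<in> W n a 0"
    show "w \<in> {(\<lambda>_. 0)}"
    proof -
      have "w i = 0" for i
        using w monoms_le_mdeg[of w n i] by (auto simp: W_def)
      then show ?thesis by auto
    qed
  qed (auto simp: W_def monoms_def mdeg_def)
  then show ?thesis by simp
qed

definition C :: "nat \<Rightarrow> nat \<Rightarrow> int fps" where
  "C n a = Abs_fps (\<lambda>t. int (card (W n a t)))"

lemma C_top: "C n (Suc n) = 1"
  by (auto simp: C_def W_top fps_eq_iff)

lemma C_rec: assumes "a \<le> n" shows "C n a * (1 - fps_X) = C n (Suc a)"
proof (rule fps_ext)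
  fix t
  show "(C n a * (1 - fps_X)) $ t = C n (Suc a) $ t"
  proof -
    have e0: "C n a * (1 - fps_X) = C n a - fps_X * C n a"
      by (metis mult.commute mult.right_neutral right_diff_distrib)
    have e: "(C n a * (1 - fps_X)) $ t = C n a $ t - (fps_X * C n a) $ t"
      unfolding e0 by simp
    show ?thesis
    proof (cases t)
      case 0 then show ?thesis unfolding e by (simp add: C_def card_W_0)
    next
      case (Suc s)
      then show ?thesis using card_W_rec[OF assms, of t] unfolding e
        by (simp add: C_def)
    qed
  qed
qed

lemma C_pow: assumes "a \<le> Suc n" shows "C n a * (1 - fps_X) ^ (Suc n - a) = 1"
  using assms
proof (induction "Suc n - a" arbitrary: a)
  case 0 then have "a = Suc n" by simp
  then show ?case by (simp add: C_top)
next
  case (Suc k)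
  then have a: "a \<le> n" "Suc n - Suc a = k" by auto
  have "C n a * (1 - fps_X) ^ (Suc n - a) = (C n a * (1 - fps_X)) * (1 - fps_X) ^ k"
    using Suc.hyps(2)[symmetric] by (simp add: algebra_simps)
  also have "\<dots> = 1" using C_rec[OF a(1)] Suc.hyps(1)[of "Suc a"] a by simp
  finally show ?case .
qed

lemma monoms_supp: "a \<in> monoms n \<Longrightarrow> a i \<noteq> 0 \<Longrightarrow> i \<le> n"
  by (rule ccontr) (auto simp: monoms_def)

lemma mmax_props:
  assumes "g \<in> monoms n" "g \<noteq> (\<lambda>_. 0)"
  shows "mmax n g \<le> n" "0 < g (mmax n g)" "\<And>j. 0 < g j \<Longrightarrow> j \<le> mmax n g"
    "\<And>j. mmax n g < j \<Longrightarrow> g j = 0"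
proof -
  obtain i where i: "g i \<noteq> 0" using assms(2) by auto
  then have "i \<le> n" using assms(1) monoms_supp by blast
  have fin: "finite {i. i \<le> n \<and> 0 < g i}" by simp
  have ne: "{i. i \<le> n \<and> 0 < g i} \<noteq> {}" using i \<open>i \<le> n\<close> by auto
  have M: "mmax n g \<in> {i. i \<le> n \<and> 0 < g i}" unfolding mmax_def using Max_in[OF fin ne] .
  then show "mmax n g \<le> n" "0 < g (mmax n g)" by auto
  show ge: "j \<le> mmax n g" if "0 < g j" for j
  proof -
    have "j \<le> n" using that assms(1) monoms_supp by blast
    then show ?thesis unfolding mmax_def using that by (intro Max_ge[OF fin]) auto
  qed
  show "g j = 0" if "mmax n g < j" for j using ge[of j] that by fastforce
qed

lemma mdeg_dec:
  assumes "M \<le> n" "0 < a M"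
  shows "Suc (mdeg n (a(M := a M - 1))) = mdeg n a"
proof -
  have "mdeg n a = (\<Sum>i\<le>n. (a(M := a M - 1)) i + (if i = M then 1 else 0))"
    unfolding mdeg_def by (rule sum.cong) (use assms in auto)
  also have "\<dots> = mdeg n (a(M := a M - 1)) + 1" using assms(1)
    by (simp add: mdeg_def sum.distrib)
  finally show ?thesis by simp
qed

lemma mdeg_inc:
  assumes "M \<le> n"
  shows "mdeg n (a(M := a M + 1)) = Suc (mdeg n a)"
proof -
  have "mdeg n (a(M := a M + 1)) = (\<Sum>i\<le>n. a i + (if i = M then 1 else 0))"
    unfolding mdeg_def by (rule sum.cong) (use assms in auto)
  also have "\<dots> = mdeg n a + 1" using assms(1)
    by (simp add: mdeg_def sum.distrib)
  finally show ?thesis by simp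
qed

lemma mdeg_mono: "a \<le> b \<Longrightarrow> mdeg n a \<le> mdeg n b"
  unfolding mdeg_def by (intro sum_mono) (simp add: le_fun_def)

definition decS :: "nat \<Rightarrow> (nat \<Rightarrow> nat) set \<Rightarrow> (nat \<Rightarrow> nat) set" where
  "decS n J = {g \<in> J. g(mmax n g := g (mmax n g) - 1) \<notin> J}"

locale upc =
  fixes n :: nat and J :: "(nat \<Rightarrow> nat) set"
  assumes sub: "J \<subseteq> monoms n"
    and up: "\<And>a b. a \<in> J \<Longrightarrow> b \<in> monoms n \<Longrightarrow> a \<le> b \<Longrightarrow> b \<in> J"
    and nz: "(\<lambda>_. 0) \<notin> J"
begin

lemma J_nz: "a \<in> J \<Longrightarrow> a \<noteq> (\<lambda>_. 0)" using nz by auto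

lemma dec_monoms: "a \<in> monoms n \<Longrightarrow> a(M := a M - 1) \<in> monoms n"
  by (auto simp: monoms_def)

lemma exist:
  "a \<in> J \<Longrightarrow> \<exists>g\<in>decS n J. g \<le> a \<and> (\<forall>p<mmax n g. a p = g p)"
proof (induction "mdeg n a" arbitrary: a rule: less_induct)
  case less
  show ?case
  proof (cases "a \<in> decS n J")
    case True then show ?thesis by auto
  next
    case False
    define M where "M = mmax n a"
    define a' where "a' = a(M := a M - 1)"
    have am: "a \<in> monoms n" using less.prems sub by auto
    note mp = mmax_props[OF am J_nz[OF less.prems]]
    have a'J: "a' \<in> J" using False less.prems by (auto simp: decS_def a'_def M_def)
    have "Suc (mdeg n a') = mdeg n a" using mdeg_dec[of "mmax n a" n a] mp(1,2) by (simp add: a'_def M_def)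
    then obtain g where g: "g \<in> decS n J" "g \<le> a'" "\<forall>p<mmax n g. a' p = g p"
      using less.hyps[OF _ a'J] by auto
    have a'a: "a' \<le> a" by (auto simp: a'_def le_fun_def)
    have gJ: "g \<in> J" using g(1) by (auto simp: decS_def)
    have gm: "g \<in> monoms n" using gJ sub by auto
    note gp = mmax_props[OF gm J_nz[OF gJ]]
    have "mmax n g \<le> M"
    proof -
      have "g \<le> a" using g(2) a'a by (rule order.trans)
      then have "g (mmax n g) \<le> a (mmax n g)" by (simp add: le_fun_def)
      then have "0 < a (mmax n g)" using gp(2) by linarith
      then show ?thesis using mp(3) by (simp add: M_def)
    qed
    then have "\<forall>p<mmax n g. a p = g p" using g(3) by (auto simp: a'_def)
    moreover have "g \<le> a" using g(2) a'a by (rule order.trans)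
    ultimately show ?thesis using g(1) by blast
  qed
qed

lemma unique_aux:
  assumes g: "g \<in> decS n J" "g \<le> a" "\<forall>p<mmax n g. a p = g p"
    and h: "h \<in> decS n J" "h \<le> a" "\<forall>p<mmax n h. a p = h p"
    and le: "mmax n g \<le> mmax n h"
    and gh: "g (mmax n g) \<le> h (mmax n g)"
  shows "g = h"
proof (rule ccontr)
  assume ne: "g \<noteq> h"
  obtain M where M: "M = mmax n g" by simp
  obtain M' where M': "M' = mmax n h" by simp
  have gJ: "g \<in> J" and hJ: "h \<in> J" using g(1) h(1) by (auto simp: decS_def)
  have gz: "\<And>p. M < p \<Longrightarrow> g p = 0"
    using mmax_props(4)[OF subsetD[OF sub gJ] J_nz[OF gJ]] M by blast
  have hz: "\<And>p. M' < p \<Longrightarrow> h p = 0"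
    using mmax_props(4)[OF subsetD[OF sub hJ] J_nz[OF hJ]] M' by blast
  have ga: "\<And>p. p < M \<Longrightarrow> a p = g p" using g(3) M by blast
  have ha: "\<And>p. p < M' \<Longrightarrow> a p = h p" using h(3) M' by blast
  have gle: "\<And>p. g p \<le> a p" using g(2) by (simp add: le_fun_def)
  have MM': "M \<le> M'" using le M M' by simp
  have ghM: "g M \<le> h M" using gh M by simp
  have hdec: "h(M' := h M' - 1) \<notin> J" using h(1) M' by (auto simp: decS_def)
  have hm: "h(M' := h M' - 1) \<in> monoms n" using dec_monoms subsetD[OF sub hJ] by blast
  have "g \<le> h(M' := h M' - 1)"
  proof (cases "M < M'")
    case True
    show ?thesis unfolding le_fun_def
    proof
      fix p show "g p \<le> (h(M' := h M' - 1)) p"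
      proof (cases "p < M")
        case True then show ?thesis using ga[of p] ha[of p] \<open>M < M'\<close> by simp
      next
        case False
        show ?thesis
        proof (cases "p = M")
          case True
          then show ?thesis using gle[of M] ha[of M] \<open>M < M'\<close> by simp
        next
          case False
          then have "M < p" using \<open>\<not> p < M\<close> by simp
          then show ?thesis using gz[of p] by simp
        qed
      qed
    qed
  next
    case False
    then have MM: "M = M'" using MM' by simp
    have lt: "g M < h M"
    proof -
      have "g M \<noteq> h M"
      proof
        assume eq: "g M = h M"
        have "g = h"
        proof
          fix p show "g p = h p"
          proof (cases "p < M")
            case True then show ?thesis using ga[of p] ha[of p] MM by simp
          next
            case False then show ?thesis using gz[of p] hz[of p] eq MM
              by (cases "p = M") auto
          qed
        qed
        then show False using ne by simp
      qed
      then show ?thesis using ghM by simp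
    qed
    show ?thesis unfolding le_fun_def
    proof
      fix p show "g p \<le> (h(M' := h M' - 1)) p"
      proof (cases "p < M")
        case True then show ?thesis using ga[of p] ha[of p] MM by simp
      next
        case False then show ?thesis using gz[of p] lt MM
          by (cases "p = M") auto
      qed
    qed
  qed
  then show False using up[OF gJ hm] hdec by simp
qed

lemma unique:
  assumes "g \<in> decS n J" "g \<le> a" "\<forall>p<mmax n g. a p = g p"
    and "h \<in> decS n J" "h \<le> a" "\<forall>p<mmax n h. a p = h p"
  shows "g = h"
proof (cases "mmax n g = mmax n h")
  case True
  show ?thesis
  proof (cases "g (mmax n g) \<le> h (mmax n g)")
    case True then show ?thesis using unique_aux[OF assms] \<open>mmax n g = mmax n h\<close> by simp
  next
    case False then show ?thesis using unique_aux[OF assms(4-6) assms(1-3)] \<open>mmax n g = mmax n h\<close> by simp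
  qed
next
  case False
  show ?thesis
  proof (cases "mmax n g < mmax n h")
    case True
    have "g (mmax n g) \<le> a (mmax n g)" using assms(2) by (simp add: le_fun_def)
    moreover have "a (mmax n g) = h (mmax n g)" using assms(6) True by simp
    ultimately have "g (mmax n g) \<le> h (mmax n g)" by simp
    then show ?thesis using unique_aux[OF assms] True by simp
  next
    case False
    then have lt: "mmax n h < mmax n g" using \<open>mmax n g \<noteq> mmax n h\<close> by simp
    have "h (mmax n h) \<le> a (mmax n h)" using assms(5) by (simp add: le_fun_def)
    moreover have "a (mmax n h) = g (mmax n h)" using assms(3) lt by simp
    ultimately have "h (mmax n h) \<le> g (mmax n h)" by simp
    then show ?thesis using unique_aux[OF assms(4-6) assms(1-3)] lt by simp
  qed
qed

definition A where "A t g = {a \<in> J. mdeg n a = t \<and> g \<le> a \<and> (\<forall>p<mmax n g. a p = g p)}"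

lemma card_A:
  assumes "g \<in> decS n J"
  shows "card (A t g) = (if t < mdeg n g then 0 else card (W n (mmax n g) (t - mdeg n g)))"
proof -
  have gJ: "g \<in> J" using assms by (auto simp: decS_def)
  have gm: "g \<in> monoms n" using gJ sub by auto
  show ?thesis
  proof (cases "t < mdeg n g")
    case True
    then have "A t g = {}" by (auto simp: A_def dest: mdeg_mono[of _ _ n])
    then show ?thesis using True by simp
  next
    case False
    have "A t g = (\<lambda>w i. g i + w i) ` W n (mmax n g) (t - mdeg n g)"
    proof (intro equalityI subsetI)
      fix a assume a: "a \<in> A t g"
      define w where "w = (\<lambda>i. a i - g i)"
      have ag: "a = (\<lambda>i. g i + w i)" using a by (auto simp: A_def w_def le_fun_def fun_eq_iff)
      have am: "a \<in> monoms n" using a sub by (auto simp: A_def)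
      have "mdeg n a = mdeg n g + mdeg n w" using mdeg_add[of n g w] ag by simp
      then have "w \<in> W n (mmax n g) (t - mdeg n g)"
        using a am by (auto simp: W_def A_def w_def monoms_def)
      then show "a \<in> (\<lambda>w i. g i + w i) ` W n (mmax n g) (t - mdeg n g)" using ag by blast
    next
      fix a assume "a \<in> (\<lambda>w i. g i + w i) ` W n (mmax n g) (t - mdeg n g)"
      then obtain w where w: "w \<in> W n (mmax n g) (t - mdeg n g)" and aw: "a = (\<lambda>i. g i + w i)" by blast
      have am: "a \<in> monoms n" using w gm by (auto simp: aw W_def monoms_def)
      have "g \<le> a" by (auto simp: aw le_fun_def)
      then have "a \<in> J" using up[OF gJ am] by simp
      moreover have "mdeg n a = t" using mdeg_add[of n g w] w False by (auto simp: aw W_def)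
      ultimately show "a \<in> A t g" using w \<open>g \<le> a\<close> by (auto simp: A_def aw W_def)
    qed
    moreover have "inj_on (\<lambda>w i. g i + w i) (W n (mmax n g) (t - mdeg n g))"
      by (rule inj_onI) (simp add: fun_eq_iff)
    ultimately show ?thesis using False card_image by simp
  qed
qed

lemma card_J:
  assumes fin: "finite (decS n J)"
  shows "card {a \<in> monoms n. mdeg n a = t \<and> a \<in> J}
     = (\<Sum>g\<in>decS n J. if t < mdeg n g then 0 else card (W n (mmax n g) (t - mdeg n g)))"
proof -
  have "{a \<in> monoms n. mdeg n a = t \<and> a \<in> J} = (\<Union>g\<in>decS n J. A t g)"
  proof (intro equalityI subsetI)
    fix a assume a: "a \<in> {a \<in> monoms n. mdeg n a = t \<and> a \<in> J}"
    then obtain g where "g\<in>decS n J" "g \<le> a \<and> (\<forall>p<mmax n g. a p = g p)" using exist by blast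
    then show "a \<in> (\<Union>g\<in>decS n J. A t g)" using a by (auto simp: A_def)
  qed (use sub in \<open>auto simp: A_def\<close>)
  moreover have "card (\<Union>g\<in>decS n J. A t g) = (\<Sum>g\<in>decS n J. card (A t g))"
  proof (rule card_UN_disjoint[OF fin])
    show "\<forall>g\<in>decS n J. finite (A t g)"
    proof
      fix g show "finite (A t g)"
        by (rule finite_subset[OF _ finite_deg_monoms[of n t]]) (use sub in \<open>auto simp: A_def\<close>)
    qed
    show "\<forall>g\<in>decS n J. \<forall>h\<in>decS n J. g \<noteq> h \<longrightarrow> A t g \<inter> A t h = {}"
      using unique by (auto simp: A_def)
  qed
  ultimately show ?thesis using card_A by simp
qed

lemma Kfps_decomp:
  assumes fin: "finite (decS n J)"
  shows "Kfps n J = 1 - (\<Sum>g\<in>decS n J. fps_X ^ mdeg n g * (1 - fps_X) ^ mmax n g)"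
proof -
  have mx: "mmax n g \<le> n" if "g \<in> decS n J" for g
    using mmax_props(1)[of g n] that sub J_nz by (auto simp: decS_def)
  have H: "Abs_fps (\<lambda>t. int (hilb n J t)) = C n 0 - (\<Sum>g\<in>decS n J. fps_X ^ mdeg n g * C n (mmax n g))"
  proof (rule fps_ext)
    fix t
    have sub1: "{a \<in> monoms n. mdeg n a = t \<and> a \<in> J} \<subseteq> W n 0 t" by (auto simp: W_def)
    have eq1: "{a \<in> monoms n. mdeg n a = t \<and> a \<notin> J} = W n 0 t - {a \<in> monoms n. mdeg n a = t \<and> a \<in> J}"
      by (auto simp: W_def)
    have "int (hilb n J t) = int (card (W n 0 t)) - int (card {a \<in> monoms n. mdeg n a = t \<and> a \<in> J})"
      unfolding hilb_def eq1 using card_Diff_subset[OF finite_subset[OF sub1 finite_W] sub1]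
        card_mono[OF finite_W sub1] by simp
    also have "\<dots> = C n 0 $ t - (\<Sum>g\<in>decS n J. (fps_X ^ mdeg n g * C n (mmax n g)) $ t)"
      unfolding card_J[OF fin] of_nat_sum
      by (auto simp: C_def fps_X_power_mult_nth intro!: sum.cong)
    finally show "Abs_fps (\<lambda>t. int (hilb n J t)) $ t = (C n 0 - (\<Sum>g\<in>decS n J. fps_X ^ mdeg n g * C n (mmax n g))) $ t"
      by (simp add: fps_sum_nth)
  qed
  have T: "fps_X ^ mdeg n g * C n (mmax n g) * (1 - fps_X) ^ (n + 1) = fps_X ^ mdeg n g * (1 - fps_X) ^ mmax n g"
    if "g \<in> decS n J" for g
  proof -
    have "(1 - fps_X :: int fps) ^ (n + 1) = (1 - fps_X) ^ (Suc n - mmax n g) * (1 - fps_X) ^ mmax n g"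
      using mx[OF that] by (simp add: power_add[symmetric])
    then have "fps_X ^ mdeg n g * C n (mmax n g) * (1 - fps_X) ^ (n + 1)
        = fps_X ^ mdeg n g * (C n (mmax n g) * (1 - fps_X) ^ (Suc n - mmax n g)) * (1 - fps_X) ^ mmax n g"
      by (simp add: mult.assoc)
    then show ?thesis using C_pow[of "mmax n g" n] mx[OF that] by simp
  qed
  have "Kfps n J = C n 0 * (1 - fps_X) ^ (Suc n - 0) - (\<Sum>g\<in>decS n J. fps_X ^ mdeg n g * C n (mmax n g) * (1 - fps_X) ^ (n + 1))"
    unfolding Kfps_def H by (simp add: left_diff_distrib sum_distrib_right)
  also have "\<dots> = 1 - (\<Sum>g\<in>decS n J. fps_X ^ mdeg n g * (1 - fps_X) ^ mmax n g)"
  proof -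
    have "(\<Sum>g\<in>decS n J. fps_X ^ mdeg n g * C n (mmax n g) * (1 - fps_X) ^ (n + 1))
        = (\<Sum>g\<in>decS n J. fps_X ^ mdeg n g * (1 - fps_X) ^ mmax n g)"
      by (rule sum.cong) (simp_all only: T)
    moreover have "C n 0 * (1 - fps_X) ^ (Suc n - 0) = 1" using C_pow[of 0 n] by simp
    ultimately show ?thesis by simp
  qed
  finally show ?thesis .
qed

end

lemma mideal_sub: "mideal n S \<subseteq> monoms n" by (auto simp: mideal_def)

lemma mideal_up: "a \<in> mideal n S \<Longrightarrow> b \<in> monoms n \<Longrightarrow> a \<le> b \<Longrightarrow> b \<in> mideal n S"
  by (auto simp: mideal_def intro: order.trans)

lemma S_in_mideal: "S \<subseteq> monoms n \<Longrightarrow> S \<subseteq> mideal n S"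
  by (auto simp: mideal_def)

lemma mingens_mideal:
  assumes "S \<subseteq> monoms n"
  shows "mingens (mideal n S) = {s\<in>S. \<forall>t\<in>S. t \<le> s \<longrightarrow> t = s}"
proof (intro equalityI subsetI)
  fix a assume a: "a \<in> mingens (mideal n S)"
  then have am: "a \<in> mideal n S" and amin: "\<And>b. b \<in> mideal n S \<Longrightarrow> b \<le> a \<Longrightarrow> b = a"
    by (auto simp: mingens_def)
  obtain s where s: "s \<in> S" "s \<le> a" using am by (auto simp: mideal_def)
  have "s = a" using amin[OF subsetD[OF S_in_mideal[OF assms] s(1)] s(2)] .
  then show "a \<in> {s\<in>S. \<forall>t\<in>S. t \<le> s \<longrightarrow> t = s}"
    using s amin S_in_mideal[OF assms] by blast
next
  fix a assume a: "a \<in> {s\<in>S. \<forall>t\<in>S. t \<le> s \<longrightarrow> t = s}"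
  have am: "a \<in> mideal n S" using a S_in_mideal[OF assms] by blast
  have "b = a" if "b \<in> mideal n S" "b \<le> a" for b
  proof -
    from that(1) obtain t where t: "t \<in> S" "t \<le> b" unfolding mideal_def by blast
    then have "t = a" using a that(2) order.trans by blast
    then show ?thesis using t(2) that(2) by simp
  qed
  then show "a \<in> mingens (mideal n S)" using am by (auto simp: mingens_def)
qed

lemma mingens_sub: "S \<subseteq> monoms n \<Longrightarrow> mingens (mideal n S) \<subseteq> S"
  using mingens_mideal by blast

lemma nz_mideal: "(\<lambda>_. 0) \<notin> S \<Longrightarrow> (\<lambda>_. 0::nat) \<notin> mideal n S"
proof
  assume "(\<lambda>_. 0) \<notin> S" "(\<lambda>_. 0::nat) \<in> mideal n S"
  then obtain t where "t \<in> S" "t \<le> (\<lambda>_. 0)" by (auto simp: mideal_def)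
  then have "t = (\<lambda>_. 0)" by (auto simp: le_fun_def fun_eq_iff)
  then show False using \<open>t \<in> S\<close> \<open>(\<lambda>_. 0) \<notin> S\<close> by simp
qed

lemma upc_mideal: "(\<lambda>_. 0) \<notin> S \<Longrightarrow> upc n (mideal n S)"
  by unfold_locales (auto simp: mideal_sub nz_mideal intro: mideal_up)

definition stable :: "nat \<Rightarrow> (nat \<Rightarrow> nat) set \<Rightarrow> bool" where
  "stable n J \<longleftrightarrow> (\<forall>u\<in>J. \<forall>i j. i < j \<longrightarrow> 0 < u j \<longrightarrow> u(j := u j - 1, i := u i + 1) \<in> J)"

lemma stable_mideal:
  assumes "S \<subseteq> monoms n"
    and gen: "\<And>g i j. g \<in> S \<Longrightarrow> i < j \<Longrightarrow> 0 < g j \<Longrightarrow> g(j := g j - 1, i := g i + 1) \<in> mideal n S"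
  shows "stable n (mideal n S)"
  unfolding stable_def
proof (intro ballI allI impI)
  fix u i j assume u: "u \<in> mideal n S" and ij: "i < j" "0 < u j"
  obtain g where g: "g \<in> S" "g \<le> u" using u by (auto simp: mideal_def)
  have um: "u \<in> monoms n" using u by (auto simp: mideal_def)
  have "j \<le> n" using monoms_supp[OF um] ij(2) by simp
  have u'm: "u(j := u j - 1, i := u i + 1) \<in> monoms n" using um \<open>j \<le> n\<close> ij(1)
    by (auto simp: monoms_def)
  have gu: "\<And>p. g p \<le> u p" using g(2) by (simp add: le_fun_def)
  show "u(j := u j - 1, i := u i + 1) \<in> mideal n S"
  proof (cases "g j < u j")
    case True
    have "g \<le> u(j := u j - 1, i := u i + 1)" unfolding le_fun_def
    proof
      fix p show "g p \<le> (u(j := u j - 1, i := u i + 1)) p"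
        using gu[of p] True ij(1) by (cases "p = i"; cases "p = j") auto
    qed
    then show ?thesis using u'm g(1) by (auto simp: mideal_def)
  next
    case False
    then have eq: "g j = u j" using gu[of j] by simp
    have "g(j := g j - 1, i := g i + 1) \<le> u(j := u j - 1, i := u i + 1)" unfolding le_fun_def
    proof
      fix p show "(g(j := g j - 1, i := g i + 1)) p \<le> (u(j := u j - 1, i := u i + 1)) p"
        using gu[of p] eq ij(1) by (cases "p = i"; cases "p = j") auto
    qed
    moreover have "g(j := g j - 1, i := g i + 1) \<in> mideal n S" using gen[OF g(1) ij(1)] eq ij(2) by simp
    ultimately show ?thesis using mideal_up u'm by blast
  qed
qed

context upc begin

lemma decS_eq_mingens:
  assumes st: "stable n J"
  shows "decS n J = mingens J"
proof (intro equalityI subsetI)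
  fix g assume g: "g \<in> mingens J"
  then have gJ: "g \<in> J" by (auto simp: mingens_def)
  note gp = mmax_props[OF subsetD[OF sub gJ] J_nz[OF gJ]]
  have "g(mmax n g := g (mmax n g) - 1) \<le> g" by (auto simp: le_fun_def)
  moreover have "g(mmax n g := g (mmax n g) - 1) \<noteq> g"
    using gp(2) by (metis fun_upd_same diff_less less_irrefl zero_less_one)
  ultimately have "g(mmax n g := g (mmax n g) - 1) \<notin> J" using g by (auto simp: mingens_def)
  then show "g \<in> decS n J" using gJ by (auto simp: decS_def)
next
  fix g assume g: "g \<in> decS n J"
  then have gJ: "g \<in> J" and gd: "g(mmax n g := g (mmax n g) - 1) \<notin> J" by (auto simp: decS_def)
  have gm: "g \<in> monoms n" using gJ sub by auto
  note gp = mmax_props[OF gm J_nz[OF gJ]]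
  have "h = g" if h: "h \<in> J" "h \<le> g" for h
  proof (rule ccontr)
    assume "h \<noteq> g"
    then obtain j where j: "h j \<noteq> g j" by (auto simp: fun_eq_iff)
    then have hj: "h j < g j" using h(2) by (metis le_fun_def order_le_neq_trans)
    have "h \<le> g(j := g j - 1)" using h(2) hj by (auto simp: le_fun_def)
    moreover have "g(j := g j - 1) \<in> monoms n" using dec_monoms[OF gm] .
    ultimately have gj: "g(j := g j - 1) \<in> J" using up[OF h(1)] by blast
    have "j \<le> mmax n g" using gp(3)[of j] hj by simp
    show False
    proof (cases "j = mmax n g")
      case True then show False using gj gd by simp
    next
      case False
      then have jl: "j < mmax n g" using \<open>j \<le> mmax n g\<close> by simp
      have "(g(j := g j - 1))(mmax n g := (g(j := g j - 1)) (mmax n g) - 1,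
              j := (g(j := g j - 1)) j + 1) \<in> J"
      proof -
        have pos: "0 < (g(j := g j - 1)) (mmax n g)" using gp(2) False by simp
        show ?thesis using st gj jl pos unfolding stable_def by blast
      qed
      moreover have "(g(j := g j - 1))(mmax n g := (g(j := g j - 1)) (mmax n g) - 1,
              j := (g(j := g j - 1)) j + 1) = g(mmax n g := g (mmax n g) - 1)"
        using hj False by (auto simp: fun_eq_iff)
      ultimately show False using gd by simp
    qed
  qed
  then show "g \<in> mingens J" using gJ by (auto simp: mingens_def)
qed

end

definition Gp :: "nat \<Rightarrow> (nat \<Rightarrow> nat) \<Rightarrow> nat \<Rightarrow> nat \<Rightarrow> nat" where
  "Gp q c v = (\<lambda>p. if q \<le> p \<and> p < v then c p else if p = v then c p + 1 else 0)"

definition Fp :: "nat \<Rightarrow> nat \<Rightarrow> (nat \<Rightarrow> nat) \<Rightarrow> nat \<Rightarrow> nat" where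
  "Fp n q c = (\<lambda>p. if q \<le> p \<and> p < n then c p else 0)"

definition LG :: "nat \<Rightarrow> nat \<Rightarrow> (nat \<Rightarrow> nat) \<Rightarrow> (nat \<Rightarrow> nat) list" where
  "LG n q c = map var [0..<q] @ map (Gp q c) [q..<n - 1] @ [Fp n q c]"

lemma ex_iff1:
  assumes "d < n" "j \<le> d"
  shows "(\<exists>i. j < i \<and> i \<le> d \<and> w = n - Suc i) \<longleftrightarrow> (n - Suc d \<le> w \<and> w < n - Suc j)"
proof
  assume "\<exists>i. j < i \<and> i \<le> d \<and> w = n - Suc i"
  then show "n - Suc d \<le> w \<and> w < n - Suc j" using assms by auto
next
  assume "n - Suc d \<le> w \<and> w < n - Suc j"
  then show "\<exists>i. j < i \<and> i \<le> d \<and> w = n - Suc i" using assms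
    by (intro exI[of _ "n - Suc w"]) auto
qed

lemma ex_iff2:
  assumes "d < n"
  shows "(\<exists>i. i \<le> d \<and> w = n - Suc i) \<longleftrightarrow> (n - Suc d \<le> w \<and> w < n)"
proof
  assume "\<exists>i. i \<le> d \<and> w = n - Suc i"
  then show "n - Suc d \<le> w \<and> w < n" using assms by auto
next
  assume "n - Suc d \<le> w \<and> w < n"
  then show "\<exists>i. i \<le> d \<and> w = n - Suc i" using assms
    by (intro exI[of _ "n - Suc w"]) auto
qed

lemma lexgens_eq:
  assumes "d < n"
  shows "lexgens n d e = LG n (n - Suc d) (\<lambda>p. aa d e (n - Suc p))"
proof -
  define q where "q = n - Suc d"
  define c where "c = (\<lambda>p. aa d e (n - Suc p))"
  have G: "map (lexgenG n d e) (rev [1..<Suc d]) = map (Gp q c) [q..<n - 1]"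
  proof (rule nth_equalityI)
    show "length (map (lexgenG n d e) (rev [1..<Suc d])) = length (map (Gp q c) [q..<n - 1])"
      using assms by (simp add: q_def del: upt_Suc)
  next
    fix k assume "k < length (map (lexgenG n d e) (rev [1..<Suc d]))"
    then have k: "k < d" by (simp del: upt_Suc)
    have r: "rev [1..<Suc d] ! k = d - k" using k by (simp add: rev_nth del: upt_Suc)
    have u: "[q..<n - 1] ! k = q + k" using k assms by (simp add: q_def)
    have "lexgenG n d e (d - k) = Gp q c (q + k)"
    proof
      fix w
      have e1: "n - Suc (d - k) = q + k" using k assms by (simp add: q_def)
      have e2: "n - Suc (q + k) = d - k" using k assms by (simp add: q_def)
      show "lexgenG n d e (d - k) w = Gp q c (q + k) w"
        unfolding lexgenG_def Gp_def ex_iff1[OF assms, of "d - k" w, simplified] e1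
        using e2 by (auto simp: c_def q_def)
    qed
    then show "map (lexgenG n d e) (rev [1..<Suc d]) ! k = map (Gp q c) [q..<n - 1] ! k"
      using k assms r u by (simp add: q_def del: upt_Suc)
  qed
  have F: "lexgenF n d e = Fp n q c"
  proof
    fix w show "lexgenF n d e w = Fp n q c w"
      unfolding lexgenF_def Fp_def ex_iff2[OF assms] by (auto simp: c_def q_def)
  qed
  show ?thesis unfolding lexgens_def LG_def G F q_def c_def by simp
qed

lemma lex_less_asym: "lex_less a b \<Longrightarrow> \<not> lex_less b a"
  unfolding lex_less_def
  by (metis less_asym linorder_neqE_nat)

lemma mmax_eq:
  assumes "g \<in> monoms n" "0 < g k" "\<And>j. k < j \<Longrightarrow> g j = 0"
  shows "mmax n g = k"
proof -
  have nz: "g \<noteq> (\<lambda>_. 0)" using assms(2) by auto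
  note mp = mmax_props[OF assms(1) nz]
  have "k \<le> mmax n g" using mp(3) assms(2) by simp
  moreover have "mmax n g \<le> k" using mp(2) assms(3) by (metis not_le less_irrefl)
  ultimately show ?thesis by simp
qed

lemma mdeg_var: "j \<le> n \<Longrightarrow> mdeg n (var j) = 1"
  by (simp add: mdeg_def var_def)

lemma sum_if_ivl:
  assumes "b \<le> Suc n"
  shows "(\<Sum>i\<le>n. if a \<le> i \<and> i < b then (f i::nat) else 0) = (\<Sum>i\<in>{a..<b}. f i)"
proof -
  have "(\<Sum>i\<le>n. if a \<le> i \<and> i < b then f i else 0) = sum f {i\<in>{..n}. a \<le> i \<and> i < b}"
    by (rule sum.inter_filter[symmetric]) simp
  also have "{i\<in>{..n}. a \<le> i \<and> i < b} = {a..<b}" using assms by auto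
  finally show ?thesis .
qed

locale lexc =
  fixes n q :: nat and c :: "nat \<Rightarrow> nat"
  assumes qn: "q < n" and cq: "0 < c q"
begin

abbreviation "G \<equiv> Gp q c"
abbreviation "F \<equiv> Fp n q c"
abbreviation "gens \<equiv> set (LG n q c)"
abbreviation "I \<equiv> mideal n gens"
definition "\<sigma> a b = (\<Sum>p\<in>{a..<b}. c p)"

lemma set_LG: "gens = var ` {..<q} \<union> G ` {q..<n - 1} \<union> {F}"
  by (auto simp: LG_def)

lemma G_val: "G v p = (if q \<le> p \<and> p < v then c p else if p = v then c p + 1 else 0)"
  by (simp add: Gp_def)

lemma F_val: "F p = (if q \<le> p \<and> p < n then c p else 0)"
  by (simp add: Fp_def)

lemma var_val: "var i p = (if p = i then 1 else 0)"
  by (simp add: var_def)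

lemma gens_supp: "g \<in> gens \<Longrightarrow> n - 1 < p \<Longrightarrow> g p = 0"
  using qn by (auto simp: set_LG G_val F_val var_val)

lemma gens_monoms: "gens \<subseteq> monoms n"
  using gens_supp by (auto simp: monoms_def)

lemma gens_nz: "(\<lambda>_. 0) \<notin> gens"
proof
  assume "(\<lambda>_. 0) \<in> gens"
  then consider (v) i where "(\<lambda>_. 0) = var i" | (g) v where "(\<lambda>_. 0) = G v" | (f) "(\<lambda>_. 0) = F"
    by (auto simp: set_LG)
  then show False
  proof cases
    case v then show False using fun_cong[OF v, of i] by (simp add: var_val)
  next
    case g then show False using fun_cong[OF g, of v] by (simp add: G_val)
  next
    case f then have "F q = 0" using fun_cong[OF f, of q] by simp
    then show False using cq qn by (simp add: F_val)
  qed
qed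

lemma upcI: "upc n I" using upc_mideal[OF gens_nz] .

lemma F_in: "F \<in> gens" by (simp add: set_LG)

lemma mmax_G: "q \<le> v \<Longrightarrow> v < n \<Longrightarrow> mmax n (G v) = v"
  by (rule mmax_eq) (auto simp: monoms_def G_val)

lemma mmax_var: "i \<le> n \<Longrightarrow> mmax n (var i) = i"
  by (rule mmax_eq) (auto simp: monoms_def var_val)

lemma mdeg_G: assumes "v < n" "q \<le> v" shows "mdeg n (G v) = \<sigma> q (Suc v) + 1"
proof -
  have "mdeg n (G v) = (\<Sum>i\<le>n. (if q \<le> i \<and> i < Suc v then c i else 0) + var v i)"
    unfolding mdeg_def by (rule sum.cong) (use assms in \<open>auto simp: G_val var_val\<close>)
  also have "\<dots> = \<sigma> q (Suc v) + 1"
    using assms by (simp add: sum.distrib sum_if_ivl \<sigma>_def mdeg_var[unfolded mdeg_def])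
  finally show ?thesis .
qed

lemma mdeg_F: "mdeg n F = \<sigma> q n"
  unfolding mdeg_def F_val using sum_if_ivl[of n n q c] by (simp add: \<sigma>_def)

lemma \<sigma>_split: "a \<le> b \<Longrightarrow> b \<le> d \<Longrightarrow> \<sigma> a d = \<sigma> a b + \<sigma> b d"
  unfolding \<sigma>_def by (simp add: sum.atLeastLessThan_concat)

lemma \<sigma>_ge: "a \<le> p \<Longrightarrow> p < b \<Longrightarrow> c p \<le> \<sigma> a b"
  unfolding \<sigma>_def by (rule member_le_sum) auto

lemma \<sigma>_Suc: "a \<le> b \<Longrightarrow> \<sigma> a (Suc b) = \<sigma> a b + c b"
  unfolding \<sigma>_def by simp

end

context lexc begin

definition "V = {v. q \<le> v \<and> v < n - 1 \<and> (\<exists>p. v < p \<and> p < n \<and> 0 < c p)}"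

lemma leD_at: "(a::nat\<Rightarrow>nat) \<le> b \<Longrightarrow> a p \<le> b p" by (simp add: le_fun_def)

lemma le_var: assumes "t \<in> gens" "t \<le> var i" "i < q" shows "t = var i"
proof -
  consider (v) j where "t = var j" "j < q" | (g) w where "t = G w" "q \<le> w" "w < n - 1" | (f) "t = F"
    using assms(1) by (auto simp: set_LG)
  then show ?thesis
  proof cases
    case v then show ?thesis using leD_at[OF assms(2), of j] by (auto simp: var_val split: if_splits)
  next
    case g then show ?thesis using leD_at[OF assms(2), of w] assms(3) by (simp add: var_val G_val)
  next
    case f then show ?thesis using leD_at[OF assms(2), of q] assms(3) cq qn by (simp add: var_val F_val)
  qed
qed

lemma le_G: assumes "t \<in> gens" "t \<le> G v" "q \<le> v" "v < n - 1"
  shows "t = G v \<or> (t = F \<and> (\<forall>p. v < p \<and> p < n \<longrightarrow> c p = 0))"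
proof -
  consider (v) j where "t = var j" "j < q" | (g) w where "t = G w" "q \<le> w" "w < n - 1" | (f) "t = F"
    using assms(1) by (auto simp: set_LG)
  then show ?thesis
  proof cases
    case v then show ?thesis using leD_at[OF assms(2), of j] assms(3) by (simp add: var_val G_val)
  next
    case g
    have "w = v"
    proof (rule ccontr)
      assume "w \<noteq> v"
      then consider "w < v" | "v < w" by linarith
      then show False
      proof cases
        case 1 then show False using leD_at[OF assms(2), of w] g by (simp add: G_val)
      next
        case 2 then show False using leD_at[OF assms(2), of w] g by (simp add: G_val)
      qed
    qed
    then show ?thesis using g by simp
  next
    case f
    have "c p = 0" if "v < p" "p < n" for p
      using leD_at[OF assms(2), of p] f that assms(3) by (simp add: G_val F_val)
    then show ?thesis using f by simp
  qed
qed

lemma F_le_G: assumes "\<forall>p. v < p \<and> p < n \<longrightarrow> c p = 0" "q \<le> v" shows "F \<le> G v"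
  unfolding le_fun_def using assms by (auto simp: G_val F_val)

lemma le_F: assumes "t \<in> gens" "t \<le> F" shows "t = F"
proof -
  consider (v) j where "t = var j" "j < q" | (g) w where "t = G w" "q \<le> w" "w < n - 1" | (f) "t = F"
    using assms(1) by (auto simp: set_LG)
  then show ?thesis
  proof cases
    case v then show ?thesis using leD_at[OF assms(2), of j] by (simp add: var_val F_val)
  next
    case g
    then have "w < n" by simp
    then show ?thesis using leD_at[OF assms(2), of w] g by (simp add: G_val F_val)
  qed simp
qed

lemma var_ne_G: assumes "i < q" "q \<le> v" shows "var i \<noteq> G v"
proof
  assume "var i = G v" then have "var i v = G v v" by simp
  then show False using assms by (simp add: var_val G_val)
qed

lemma var_ne_F: assumes "i < q" shows "var i \<noteq> F"
proof
  assume "var i = F" then have "var i q = F q" by simp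
  then show False using assms cq qn by (simp add: var_val F_val)
qed

lemma G_ne_F: assumes "q \<le> v" "v < n" shows "G v \<noteq> F"
proof
  assume "G v = F" then have "G v v = F v" by simp
  then show False using assms by (simp add: G_val F_val)
qed

lemma G_inj: "q \<le> v \<Longrightarrow> q \<le> w \<Longrightarrow> G v = G w \<Longrightarrow> v = w"
  using le_G by (metis G_val Suc_eq_plus1 less_irrefl linorder_neqE_nat n_not_Suc_n)

lemma mingens_I: "mingens I = var ` {..<q} \<union> G ` V \<union> {F}"
proof -
  have e: "mingens I = {s\<in>gens. \<forall>t\<in>gens. t \<le> s \<longrightarrow> t = s}"
    by (rule mingens_mideal[OF gens_monoms])
  show ?thesis
  proof (intro equalityI subsetI)
    fix s assume "s \<in> mingens I"
    then have s: "s \<in> gens" "\<And>t. t \<in> gens \<Longrightarrow> t \<le> s \<Longrightarrow> t = s" using e by auto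
    consider (v) j where "s = var j" "j < q" | (g) w where "s = G w" "q \<le> w" "w < n - 1" | (f) "s = F"
      using s(1) by (auto simp: set_LG)
    then show "s \<in> var ` {..<q} \<union> G ` V \<union> {F}"
    proof cases
      case g
      have "\<exists>p. w < p \<and> p < n \<and> 0 < c p"
      proof (rule ccontr)
        assume "\<not> (\<exists>p. w < p \<and> p < n \<and> 0 < c p)"
        then have "F \<le> G w" using F_le_G[of w] g by auto
        then have "F = G w" using s(2)[OF F_in] g by simp
        then show False using G_ne_F[of w] g by fastforce
      qed
      then show ?thesis using g by (auto simp: V_def)
    qed auto
  next
    fix s assume s: "s \<in> var ` {..<q} \<union> G ` V \<union> {F}"
    have "s \<in> gens" using s by (auto simp: set_LG V_def)
    moreover have "\<forall>t\<in>gens. t \<le> s \<longrightarrow> t = s"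
    proof (intro ballI impI)
      fix t assume t: "t \<in> gens" "t \<le> s"
      from s consider (v) j where "s = var j" "j < q" | (g) w where "s = G w" "w \<in> V" | (f) "s = F"
        by auto
      then show "t = s"
      proof cases
        case v then show ?thesis using le_var t by simp
      next
        case g
        then have w: "q \<le> w" "w < n - 1" "\<exists>p. w < p \<and> p < n \<and> 0 < c p" by (auto simp: V_def)
        show ?thesis using le_G[OF t(1) _ w(1,2)] t(2) g w(3) by fastforce
      next
        case f then show ?thesis using le_F t by simp
      qed
    qed
    ultimately show "s \<in> mingens I" using e by simp
  qed
qed

lemma mingens_sub_gens: "mingens I \<subseteq> gens"
  using mingens_sub[OF gens_monoms] .

lemma F_mingen: "F \<in> mingens I" by (simp add: mingens_I)

lemma gens_supp_lo: "g \<in> gens \<Longrightarrow> q \<le> p \<Longrightarrow> g \<noteq> F \<Longrightarrow> (\<exists>v. g = G v \<and> q \<le> v \<and> v < n - 1) \<or> g p = 0"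
  by (auto simp: set_LG var_val)

lemma stable_I: "stable n I"
proof (rule stable_mideal[OF gens_monoms])
  fix g i j assume g: "g \<in> gens" and ij: "i < j" "0 < g j"
  have gm: "g \<in> monoms n" using g gens_monoms by auto
  have jn: "j \<le> n" using monoms_supp[OF gm] ij(2) by simp
  have rm: "g(j := g j - 1, i := g i + 1) \<in> monoms n" using gm jn ij(1) by (auto simp: monoms_def)
  consider (v) k where "g = var k" "k < q" | (gg) v where "g = G v" "q \<le> v" "v < n - 1" | (f) "g = F"
    using g by (auto simp: set_LG)
  then show "g(j := g j - 1, i := g i + 1) \<in> I"
  proof cases
    case v
    then have "j = k" using ij(2) by (simp add: var_val split: if_splits)
    then have "g(j := g j - 1, i := g i + 1) = var i" using v ij(1) by (auto simp: var_val fun_eq_iff)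
    moreover have "var i \<in> gens" using v ij(1) \<open>j = k\<close> by (simp add: set_LG)
    ultimately show ?thesis using S_in_mideal[OF gens_monoms] by auto
  next
    case gg
    have jq: "q \<le> j" "j \<le> v" using ij(2) gg by (auto simp: G_val split: if_splits)
    show ?thesis
    proof (cases "i < q")
      case True
      have "var i \<le> g(j := g j - 1, i := g i + 1)" using ij(1) by (auto simp: le_fun_def var_val)
      moreover have "var i \<in> I" using True S_in_mideal[OF gens_monoms] by (auto simp: set_LG)
      ultimately show ?thesis using mideal_up rm by blast
    next
      case False
      have "G i \<le> g(j := g j - 1, i := g i + 1)" unfolding le_fun_def
      proof
        fix p show "G i p \<le> (g(j := g j - 1, i := g i + 1)) p"
          using gg ij(1) jq False by (auto simp: G_val)
      qed
      moreover have "G i \<in> I" using False ij(1) jq gg S_in_mideal[OF gens_monoms]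
        by (auto simp: set_LG)
      ultimately show ?thesis using mideal_up rm by blast
    qed
  next
    case f
    have jq: "q \<le> j" "j < n" using ij(2) f by (auto simp: F_val split: if_splits)
    show ?thesis
    proof (cases "i < q")
      case True
      have "var i \<le> g(j := g j - 1, i := g i + 1)" using ij(1) by (auto simp: le_fun_def var_val)
      moreover have "var i \<in> I" using True S_in_mideal[OF gens_monoms] by (auto simp: set_LG)
      ultimately show ?thesis using mideal_up rm by blast
    next
      case False
      have "G i \<le> g(j := g j - 1, i := g i + 1)" unfolding le_fun_def
      proof
        fix p show "G i p \<le> (g(j := g j - 1, i := g i + 1)) p"
          using f ij(1) jq False by (auto simp: G_val F_val)
      qed
      moreover have "G i \<in> I" using False ij(1) jq S_in_mideal[OF gens_monoms]
        by (auto simp: set_LG)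
      ultimately show ?thesis using mideal_up rm by blast
    qed
  qed
qed

lemma lex_var_var: "i < j \<Longrightarrow> lex_less (var j) (var i)"
  unfolding lex_less_def by (intro exI[of _ i]) (auto simp: var_val)

lemma lex_G_var: "i < q \<Longrightarrow> q \<le> v \<Longrightarrow> lex_less (G v) (var i)"
  unfolding lex_less_def by (intro exI[of _ i]) (auto simp: var_val G_val)

lemma lex_F_var: "i < q \<Longrightarrow> lex_less F (var i)"
  unfolding lex_less_def by (intro exI[of _ i]) (auto simp: var_val F_val)

lemma lex_G_G: "q \<le> v \<Longrightarrow> v < w \<Longrightarrow> lex_less (G w) (G v)"
  unfolding lex_less_def by (intro exI[of _ v]) (auto simp: G_val)

lemma lex_F_G: "q \<le> v \<Longrightarrow> v < n \<Longrightarrow> lex_less F (G v)"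
  unfolding lex_less_def by (intro exI[of _ v]) (auto simp: G_val F_val)

lemma lex_F_all: "g \<in> gens \<Longrightarrow> g \<noteq> F \<Longrightarrow> lex_less F g"
  using lex_F_var lex_F_G by (auto simp: set_LG)

end

context lexc begin

abbreviation "M \<equiv> mingens I"

lemma claimA:
  assumes "\<And>p. q \<le> p \<Longrightarrow> p \<le> i \<Longrightarrow> m p = c p" "\<And>p. p < q \<Longrightarrow> m p = 0"
    "q \<le> i" "0 < c i" "i + 1 < n"
  shows "m(i := m i - 1, Suc i := m (Suc i) + 1) \<notin> gens"
proof
  define r where "r = m(i := m i - 1, Suc i := m (Suc i) + 1)"
  assume "m(i := m i - 1, Suc i := m (Suc i) + 1) \<in> gens"
  then have rg: "r \<in> gens" by (simp add: r_def)
  have r1: "\<And>p. p < i \<Longrightarrow> r p = m p" by (simp add: r_def)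
  have r2: "r i = c i - 1" using assms(1)[of i] assms(3) by (simp add: r_def)
  consider (v) k where "r = var k" "k < q" | (g) w where "r = G w" "q \<le> w" "w < n - 1" | (f) "r = F"
    using rg by (auto simp: set_LG)
  then show False
  proof cases
    case v
    then have "r k = 1" by (simp add: var_val)
    moreover have "r k = 0" using r1[of k] assms(2)[of k] v assms(3) by simp
    ultimately show False by simp
  next
    case g
    consider "w < i" | "w = i" | "i < w" by linarith
    then show False
    proof cases
      case 1 then have "r w = c w" using r1[of w] assms(1)[of w] g by simp
      moreover have "r w = c w + 1" using g by (simp add: G_val)
      ultimately show False by simp
    next
      case 2 then have "r i = c i + 1" using g by (simp add: G_val)
      then show False using r2 by simp
    next
      case 3 then have "r i = c i" using g assms(3) by (simp add: G_val)
      then show False using r2 assms(4) by simp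
    qed
  next
    case f
    then have "r i = c i" using assms(3,5) by (simp add: F_val)
    then show False using r2 assms(4) by simp
  qed
qed

lemma shG: "q \<le> v \<Longrightarrow> (G v)(v := G v v - 1, Suc v := G v (Suc v) + 1)
    = (\<lambda>p. if q \<le> p \<and> p \<le> v then c p else if p = Suc v then 1 else 0)"
  by (auto simp: fun_eq_iff G_val)

lemma V_Suc: assumes "v \<in> V" "c (Suc v) = 0" shows "Suc v \<in> V"
proof -
  obtain p where p: "v < p" "p < n" "0 < c p" using assms(1) by (auto simp: V_def)
  then have "Suc v < p" using assms(2) by (metis Suc_lessI less_irrefl)
  then show ?thesis using p assms(1) by (auto simp: V_def)
qed

lemma claimB:
  assumes "v \<in> V"
  shows "(G v)(v := G v v - 1, Suc v := G v (Suc v) + 1) \<in> M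
     \<longleftrightarrow> (c (Suc v) = 0 \<or> (c (Suc v) = 1 \<and> (\<forall>p. Suc v < p \<and> p < n \<longrightarrow> c p = 0)))"
proof -
  have v: "q \<le> v" "v < n - 1" using assms by (auto simp: V_def)
  define R where "R = (\<lambda>p. if q \<le> p \<and> p \<le> v then c p else if p = Suc v then 1 else (0::nat))"
  have e: "(G v)(v := G v v - 1, Suc v := G v (Suc v) + 1) = R" unfolding R_def using shG v by simp
  show ?thesis unfolding e
  proof
    assume "R \<in> M"
    then have "R \<in> gens" using mingens_sub_gens by auto
    then consider (vv) k where "R = var k" "k < q" | (g) w where "R = G w" "q \<le> w" "w < n - 1" | (f) "R = F"
      by (auto simp: set_LG)
    then show "c (Suc v) = 0 \<or> (c (Suc v) = 1 \<and> (\<forall>p. Suc v < p \<and> p < n \<longrightarrow> c p = 0))"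
    proof cases
      case vv
      then have "R k = 1" by (simp add: var_val)
      moreover have "R k = 0" using vv(2) v unfolding R_def by simp
      ultimately show ?thesis by simp
    next
      case g
      have Rw: "R w = G w w" using g(1) by simp
      have Gw: "G w w = c w + 1" by (simp add: G_val)
      consider "w < v" | "w = v" | "w = Suc v" | "Suc v < w" by linarith
      then show ?thesis
      proof cases
        case 1 then have "R w = c w" using g(2) unfolding R_def by simp
        then show ?thesis using Rw Gw by simp
      next
        case 2 then have "R w = c w" using g(2) unfolding R_def by simp
        then show ?thesis using Rw Gw by simp
      next
        case 3 then have "R w = 1" unfolding R_def by simp
        then show ?thesis using Rw Gw 3 by simp
      next
        case 4 then have "R w = 0" unfolding R_def by simp
        then show ?thesis using Rw Gw by simp
      qed
    next
      case f
      have "R (Suc v) = c (Suc v)" using f v by (simp add: F_val)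
      then have "c (Suc v) = 1" by (simp add: R_def)
      moreover have "c p = 0" if "Suc v < p" "p < n" for p
      proof -
        have "R p = c p" using f that v by (simp add: F_val)
        then show ?thesis using that by (simp add: R_def)
      qed
      ultimately show ?thesis by simp
    qed
  next
    assume h: "c (Suc v) = 0 \<or> (c (Suc v) = 1 \<and> (\<forall>p. Suc v < p \<and> p < n \<longrightarrow> c p = 0))"
    then consider "c (Suc v) = 0" | "c (Suc v) = 1" "\<forall>p. Suc v < p \<and> p < n \<longrightarrow> c p = 0" by argo
    then show "R \<in> M"
    proof cases
      case 1
      have "R = G (Suc v)" using 1 v by (auto simp: fun_eq_iff R_def G_val)
      then show ?thesis using V_Suc[OF assms 1] by (simp add: mingens_I)
    next
      case 2
      have "R = F" using 2 v by (auto simp: fun_eq_iff R_def F_val)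
      then show ?thesis by (simp add: mingens_I)
    qed
  qed
qed

lemma deg_F_pos: "1 \<le> mdeg n F"
  using \<sigma>_ge[of q q n] cq qn by (simp add: mdeg_F)

lemma deg_G_ge2: "q \<le> v \<Longrightarrow> v < n \<Longrightarrow> 2 \<le> mdeg n (G v)"
  using \<sigma>_ge[of q q "Suc v"] cq by (simp add: mdeg_G)

lemma deg_F_one: assumes "mdeg n F = 1" shows "F = var q"
proof -
  have s: "\<sigma> q n = 1" using assms by (simp add: mdeg_F)
  have "\<sigma> q n = c q + \<sigma> (Suc q) n" using \<sigma>_split[of q "Suc q" n] qn by (simp add: \<sigma>_def)
  then have cq1: "c q = 1" and z: "\<sigma> (Suc q) n = 0" using cq s by auto
  have "c p = 0" if "Suc q \<le> p" "p < n" for p using \<sigma>_ge[OF that] z by simp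
  then show ?thesis using cq1 qn by (auto simp: fun_eq_iff F_val var_val)
qed

lemma varq_ne_G: "q \<le> w \<Longrightarrow> var q \<noteq> G w"
proof
  assume a: "q \<le> w" "var q = G w"
  then have h: "var q w = G w w" by simp
  show False using h a(1) cq by (cases "w = q") (simp_all add: var_val G_val)
qed

lemma var_inj: "var a = var b \<Longrightarrow> a = b"
  by (metis var_val zero_neq_one)

lemma part_i_var:
  assumes k: "k < q"
  shows "expandable n I (var k) \<longleftrightarrow> smallest_of_degree n I (var k)"
proof -
  have km: "var k \<in> M" using k by (simp add: mingens_I)
  have sh: "(var k)(k := var k k - 1, Suc k := var k (Suc k) + 1) = var (Suc k)"
    by (auto simp: fun_eq_iff var_val)
  have ex: "expandable n I (var k) \<longleftrightarrow> var (Suc k) \<notin> M"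
  proof -
    have "(\<forall>i. i + 1 < n \<longrightarrow> 0 < var k i \<longrightarrow> (var k)(i := var k i - 1, Suc i := var k (Suc i) + 1) \<notin> M)
       \<longleftrightarrow> var (Suc k) \<notin> M"
    proof
      assume "\<forall>i. i + 1 < n \<longrightarrow> 0 < var k i \<longrightarrow> (var k)(i := var k i - 1, Suc i := var k (Suc i) + 1) \<notin> M"
      then show "var (Suc k) \<notin> M" using sh k qn by (metis Suc_eq_plus1 Suc_leI le_less_trans var_val less_numeral_extra(1))
    next
      assume "var (Suc k) \<notin> M"
      then show "\<forall>i. i + 1 < n \<longrightarrow> 0 < var k i \<longrightarrow> (var k)(i := var k i - 1, Suc i := var k (Suc i) + 1) \<notin> M"
        using sh by (auto simp: var_val split: if_splits)
    qed
    then show ?thesis using km by (simp add: expandable_def)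
  qed
  have dk: "mdeg n (var k) = 1" using k qn by (simp add: mdeg_var)
  show ?thesis
  proof (cases "Suc k < q")
    case True
    have "var (Suc k) \<in> M" using True by (simp add: mingens_I)
    moreover have "\<not> smallest_of_degree n I (var k)"
    proof
      assume s: "smallest_of_degree n I (var k)"
      have "mdeg n (var (Suc k)) = 1" using True qn by (simp add: mdeg_var)
      moreover have "var (Suc k) \<noteq> var k" using var_inj by fastforce
      ultimately have "lex_less (var k) (var (Suc k))"
        using s \<open>var (Suc k) \<in> M\<close> dk unfolding smallest_of_degree_def by auto
      then show False using lex_less_asym lex_var_var[of k "Suc k"] by auto
    qed
    ultimately show ?thesis using ex by simp
  next
    case False
    then have kq: "Suc k = q" using k by simp
    have vq: "var q \<in> M \<longleftrightarrow> F = var q"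
    proof
      assume "var q \<in> M"
      then show "F = var q" using varq_ne_G var_inj by (auto simp: mingens_I V_def)
    next
      assume "F = var q" then show "var q \<in> M" using F_mingen by simp
    qed
    show ?thesis
    proof (cases "F = var q")
      case True
      have "\<not> smallest_of_degree n I (var k)"
      proof
        assume s: "smallest_of_degree n I (var k)"
        have "mdeg n F = 1" using True qn by (simp add: mdeg_var)
        moreover have "F \<noteq> var k" using var_ne_F[OF k] by simp
        ultimately have "lex_less (var k) F" using s F_mingen dk unfolding smallest_of_degree_def by auto
        then show False using lex_less_asym lex_F_var[OF k] by auto
      qed
      then show ?thesis using ex vq kq True by simp
    next
      case False
      have "smallest_of_degree n I (var k)" unfolding smallest_of_degree_def
      proof (intro conjI km ballI impI)
        fix g assume g: "g \<in> M" "mdeg n g = mdeg n (var k)" "g \<noteq> var k"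
        from g(1) consider (vv) j where "g = var j" "j < q" | (gg) w where "g = G w" "w \<in> V" | (f) "g = F"
          by (auto simp: mingens_I)
        then show "lex_less (var k) g"
        proof cases
          case vv then have "j \<noteq> k" using g(3) by auto
          then have "j < k" using vv kq by linarith
          then show ?thesis using vv lex_var_var by simp
        next
          case gg then have "2 \<le> mdeg n g" using deg_G_ge2 by (auto simp: V_def)
          then show ?thesis using g(2) dk by simp
        next
          case f then show ?thesis using g(2) dk deg_F_one False by simp
        qed
      qed
      then show ?thesis using ex vq kq False by simp
    qed
  qed
qed

end

context lexc begin

lemma part_i_G:
  assumes vV: "v \<in> V"
  shows "expandable n I (G v) \<longleftrightarrow> smallest_of_degree n I (G v)"
proof -
  have v: "q \<le> v" "v < n - 1" and exp: "\<exists>p. v < p \<and> p < n \<and> 0 < c p" using vV by (auto simp: V_def)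
  have vm: "G v \<in> M" using vV by (simp add: mingens_I)
  define P where "P = (c (Suc v) = 0 \<or> (c (Suc v) = 1 \<and> (\<forall>p. Suc v < p \<and> p < n \<longrightarrow> c p = 0)))"
  have ex: "expandable n I (G v) \<longleftrightarrow> \<not> P"
  proof -
    have "(\<forall>i. i + 1 < n \<longrightarrow> 0 < G v i \<longrightarrow> (G v)(i := G v i - 1, Suc i := G v (Suc i) + 1) \<notin> M)
       \<longleftrightarrow> \<not> P"
    proof
      assume "\<forall>i. i + 1 < n \<longrightarrow> 0 < G v i \<longrightarrow> (G v)(i := G v i - 1, Suc i := G v (Suc i) + 1) \<notin> M"
      moreover have "v + 1 < n" "0 < G v v" using v by (auto simp: G_val)
      ultimately have "(G v)(v := G v v - 1, Suc v := G v (Suc v) + 1) \<notin> M" by blast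
      then show "\<not> P" using claimB[OF vV] by (simp add: P_def)
    next
      assume nP: "\<not> P"
      show "\<forall>i. i + 1 < n \<longrightarrow> 0 < G v i \<longrightarrow> (G v)(i := G v i - 1, Suc i := G v (Suc i) + 1) \<notin> M"
      proof (intro allI impI)
        fix i assume i: "i + 1 < n" "0 < G v i"
        then have iv: "q \<le> i" "i \<le> v" using v by (auto simp: G_val split: if_splits)
        show "(G v)(i := G v i - 1, Suc i := G v (Suc i) + 1) \<notin> M"
        proof (cases "i = v")
          case True then show ?thesis using claimB[OF vV] nP by (simp add: P_def)
        next
          case False
          then have ilt: "i < v" using iv by simp
          have "(G v)(i := G v i - 1, Suc i := G v (Suc i) + 1) \<notin> gens"
            by (rule claimA) (use ilt iv i in \<open>auto simp: G_val\<close>)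
          then show ?thesis using mingens_sub_gens by auto
        qed
      qed
    qed
    then show ?thesis using vm by (simp add: expandable_def)
  qed
  have vn: "v < n" "Suc v < n" using v by auto
  have dv: "mdeg n (G v) = \<sigma> q (Suc v) + 1" using mdeg_G[OF vn(1) v(1)] .
  show ?thesis
  proof (cases P)
    case True
    have "\<not> smallest_of_degree n I (G v)"
    proof
      assume s: "smallest_of_degree n I (G v)"
      from True consider "c (Suc v) = 0" | "c (Suc v) = 1" "\<forall>p. Suc v < p \<and> p < n \<longrightarrow> c p = 0"
        unfolding P_def by argo
      then show False
      proof cases
        case 1
        have sv: "Suc v \<in> V" using V_Suc[OF vV 1] .
        then have "Suc v < n" by (auto simp: V_def)
        have "mdeg n (G (Suc v)) = mdeg n (G v)"
          using mdeg_G[OF \<open>Suc v < n\<close>] v dv \<sigma>_Suc[of q "Suc v"] 1 by simp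
        moreover have "G (Suc v) \<noteq> G v" using lex_G_G[of v "Suc v"] v lex_less_asym by fastforce
        moreover have "G (Suc v) \<in> M" using sv by (simp add: mingens_I)
        ultimately have "lex_less (G v) (G (Suc v))" using s unfolding smallest_of_degree_def by auto
        then show False using lex_less_asym lex_G_G[of v "Suc v"] v by auto
      next
        case 2
        have z: "\<sigma> (Suc (Suc v)) n = 0"
          unfolding \<sigma>_def using 2(2) by (auto intro!: sum.neutral)
        have "\<sigma> q n = \<sigma> q (Suc v) + \<sigma> (Suc v) n" using \<sigma>_split[of q "Suc v" n] v by simp
        moreover have "\<sigma> (Suc v) n = c (Suc v) + \<sigma> (Suc (Suc v)) n"
          using \<sigma>_split[of "Suc v" "Suc (Suc v)" n] vn by (simp add: \<sigma>_def)
        ultimately have "mdeg n F = mdeg n (G v)" using z 2(1) dv by (simp add: mdeg_F)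
        moreover have "F \<noteq> G v" using G_ne_F[of v] v vn by auto
        ultimately have "lex_less (G v) F" using s F_mingen unfolding smallest_of_degree_def by auto
        then show False using lex_less_asym lex_F_G[of v] v by auto
      qed
    qed
    then show ?thesis using ex True by simp
  next
    case False
    then have c1: "1 \<le> c (Suc v)" unfolding P_def by simp
    have "smallest_of_degree n I (G v)" unfolding smallest_of_degree_def
    proof (intro conjI vm ballI impI)
      fix g assume g: "g \<in> M" "mdeg n g = mdeg n (G v)" "g \<noteq> G v"
      from g(1) consider (vv) j where "g = var j" "j < q" | (gg) w where "g = G w" "w \<in> V" | (f) "g = F"
        by (auto simp: mingens_I)
      then show "lex_less (G v) g"
      proof cases
        case vv then have "mdeg n g = 1" using qn by (simp add: mdeg_var)
        then show ?thesis using g(2) deg_G_ge2[OF v(1) vn(1)] by simp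
      next
        case gg
        then have w: "q \<le> w" "w < n - 1" by (auto simp: V_def)
        consider "w < v" | "w = v" | "v < w" by linarith
        then show ?thesis
        proof cases
          case 1 then show ?thesis using gg lex_G_G w by simp
        next
          case 2 then show ?thesis using g(3) gg by simp
        next
          case 3
          have "mdeg n g = \<sigma> q (Suc w) + 1" using gg mdeg_G[of w] w by simp
          moreover have "\<sigma> q (Suc w) = \<sigma> q (Suc v) + \<sigma> (Suc v) (Suc w)"
            using \<sigma>_split[of q "Suc v" "Suc w"] v 3 by simp
          moreover have "c (Suc v) \<le> \<sigma> (Suc v) (Suc w)" using \<sigma>_ge[of "Suc v" "Suc v" "Suc w"] 3 by simp
          ultimately show ?thesis using g(2) dv c1 by simp
        qed
      next
        case f
        have "\<sigma> q n = \<sigma> q (Suc v) + \<sigma> (Suc v) n" using \<sigma>_split[of q "Suc v" n] v by simp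
        moreover have sp: "\<sigma> (Suc v) n = c (Suc v) + \<sigma> (Suc (Suc v)) n"
          using \<sigma>_split[of "Suc v" "Suc (Suc v)" n] vn by (simp add: \<sigma>_def)
        moreover have "2 \<le> \<sigma> (Suc v) n"
        proof (cases "c (Suc v) = 1")
          case True
          then obtain p where p: "Suc v < p" "p < n" "0 < c p" using False unfolding P_def by auto
          have "c p \<le> \<sigma> (Suc (Suc v)) n" using \<sigma>_ge[of "Suc (Suc v)" p n] p by simp
          then show ?thesis using sp True p(3) by simp
        next
          case False then show ?thesis using sp c1 by simp
        qed
        ultimately show ?thesis using g(2) f dv by (simp add: mdeg_F)
      qed
    qed
    then show ?thesis using ex False by simp
  qed
qed

lemma part_i_F: "expandable n I F \<and> smallest_of_degree n I F"
proof
  show "expandable n I F" unfolding expandable_def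
  proof (intro conjI F_mingen allI impI)
    fix i assume i: "i + 1 < n" "0 < F i"
    then have iq: "q \<le> i" by (auto simp: F_val split: if_splits)
    have "F(i := F i - 1, Suc i := F (Suc i) + 1) \<notin> gens"
      by (rule claimA) (use i iq in \<open>auto simp: F_val\<close>)
    then show "F(i := F i - 1, Suc i := F (Suc i) + 1) \<notin> M" using mingens_sub_gens by auto
  qed
  show "smallest_of_degree n I F" unfolding smallest_of_degree_def
    using F_mingen lex_F_all mingens_sub_gens by auto
qed

lemma part_i: "\<forall>m\<in>M. expandable n I m \<longleftrightarrow> smallest_of_degree n I m"
proof
  fix m assume "m \<in> M"
  then consider (vv) j where "m = var j" "j < q" | (gg) w where "m = G w" "w \<in> V" | (f) "m = F"
    by (auto simp: mingens_I)
  then show "expandable n I m \<longleftrightarrow> smallest_of_degree n I m"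
    using part_i_var part_i_G part_i_F by cases auto
qed

lemma deg_mingens_le: "g \<in> M \<Longrightarrow> mdeg n g \<le> mdeg n F"
proof -
  assume "g \<in> M"
  then consider (vv) j where "g = var j" "j < q" | (gg) w where "g = G w" "w \<in> V" | (f) "g = F"
    by (auto simp: mingens_I)
  then show ?thesis
  proof cases
    case vv then show ?thesis using deg_F_pos qn by (simp add: mdeg_var)
  next
    case gg
    then obtain p where w: "q \<le> w" "w < n - 1" "w < p" "p < n" "0 < c p" by (auto simp: V_def)
    have "\<sigma> q n = \<sigma> q (Suc w) + \<sigma> (Suc w) n" using \<sigma>_split[of q "Suc w" n] w by simp
    moreover have "c p \<le> \<sigma> (Suc w) n" using \<sigma>_ge[of "Suc w" p n] w by simp
    ultimately show ?thesis using gg mdeg_G[of w] w by (simp add: mdeg_F)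
  qed simp
qed

lemma exp_deg_lt:
  assumes "expandable n I m" "m \<noteq> F"
  shows "mdeg n m < mdeg n F"
proof -
  have mM: "m \<in> M" using assms(1) by (simp add: expandable_def)
  have s: "smallest_of_degree n I m" using part_i mM assms(1) by blast
  have "mdeg n m \<noteq> mdeg n F"
  proof
    assume "mdeg n m = mdeg n F"
    then have "lex_less m F" using s F_mingen assms(2) unfolding smallest_of_degree_def by auto
    moreover have "lex_less F m" using lex_F_all mM mingens_sub_gens assms(2) by auto
    ultimately show False using lex_less_asym by auto
  qed
  then show ?thesis using deg_mingens_le[OF mM] by simp
qed

end

abbreviation "Q1 \<equiv> [:1, -1:] :: int poly"

lemma fps_Q1: "fps_of_poly Q1 = 1 - fps_X"
  by (rule fps_ext) (auto simp: coeff_pCons split: nat.split)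

lemma degree_Q1_pow: "degree (Q1 ^ a) = a"
  by (simp add: degree_power_eq)

lemma coeff_Q1_pow_top: "coeff (Q1 ^ a) a = (-1) ^ a"
  using lead_coeff_power[of Q1 a] degree_Q1_pow[of a] by simp

definition Kp :: "nat \<Rightarrow> (nat \<Rightarrow> nat) set \<Rightarrow> int poly" where
  "Kp n S = 1 - (\<Sum>g\<in>S. monom 1 (mdeg n g) * Q1 ^ mmax n g)"

lemma Kpoly_eq:
  assumes "upc n J" "stable n J" "finite (mingens J)"
  shows "Kpoly n J = Kp n (mingens J)"
proof -
  interpret upc n J by fact
  have d: "decS n J = mingens J" using decS_eq_mingens[OF assms(2)] .
  have "Kfps n J = fps_of_poly (Kp n (mingens J))"
    unfolding Kfps_decomp[unfolded d, OF assms(3)] Kp_def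
    by (simp add: fps_of_poly_diff fps_of_poly_sum fps_of_poly_mult fps_of_poly_power
        fps_of_poly_monom' fps_Q1)
  then show ?thesis unfolding Kpoly_def
    by (metis (mono_tags, lifting) fps_of_poly_eq_iff the_equality)
qed

lemma coeff_term_0: "s + a < k \<Longrightarrow> coeff (monom 1 s * Q1 ^ a) k = 0"
  by (simp add: coeff_monom_mult coeff_eq_0 degree_Q1_pow)

lemma coeff_term_top: "coeff (monom 1 s * Q1 ^ a) (s + a) = (-1) ^ a"
  by (simp add: coeff_monom_mult coeff_Q1_pow_top)

lemma coeff_Kp_0:
  assumes "finite S" "0 < k" "\<And>g. g \<in> S \<Longrightarrow> mdeg n g + mmax n g < k"
  shows "coeff (Kp n S) k = 0"
  using assms by (simp add: Kp_def coeff_diff coeff_sum coeff_term_0)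

lemma coeff_Kp_top:
  assumes "finite S" "0 < k" "f \<in> S" "mdeg n f + mmax n f = k"
    "\<And>g. g \<in> S \<Longrightarrow> g \<noteq> f \<Longrightarrow> mdeg n g + mmax n g < k"
  shows "coeff (Kp n S) k \<noteq> 0"
proof -
  have "coeff (Kp n S) k = - (\<Sum>g\<in>S. coeff (monom 1 (mdeg n g) * Q1 ^ mmax n g) k)"
    using assms(2) by (simp add: Kp_def coeff_diff coeff_sum)
  also have "(\<Sum>g\<in>S. coeff (monom 1 (mdeg n g) * Q1 ^ mmax n g) k)
      = coeff (monom 1 (mdeg n f) * Q1 ^ mmax n f) k"
    by (rule sum.remove[OF assms(1,3), THEN trans]) (simp add: coeff_term_0 assms(5))
  also have "\<dots> = (-1) ^ mmax n f" using coeff_term_top assms(4) by metis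
  finally show ?thesis by simp
qed

lemma mmax_le_bound:
  assumes "g \<in> monoms n" "g \<noteq> (\<lambda>_. 0)" "\<And>p. b < p \<Longrightarrow> g p = 0"
  shows "mmax n g \<le> b"
  using mmax_props(2)[OF assms(1,2)] assms(3) by (metis not_le less_irrefl)

locale lexe = lexc +
  fixes m :: "nat \<Rightarrow> nat"
  assumes exm: "expandable n I m" and mF: "m \<noteq> F"
begin

abbreviation "Mx \<equiv> mmax n m"
definition "T = (I - mideal n {m}) \<union> {m(j := m j + 1) | j. mmax n m \<le> j \<and> j \<le> n - 1}"
abbreviation "E \<equiv> mideal n T"

lemma E_def': "expansion n I m = E" by (simp add: expansion_def T_def)

lemma mM: "m \<in> M" using exm by (simp add: expandable_def)
lemma mg: "m \<in> gens" using mM mingens_sub_gens by auto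
lemma mmon: "m \<in> monoms n" using mg gens_monoms by auto
lemma mnz: "m \<noteq> (\<lambda>_. 0)" using mg gens_nz by auto
lemma m_supp: "n - 1 < p \<Longrightarrow> m p = 0" using gens_supp mg by auto
lemma mI: "m \<in> I" using mg S_in_mideal[OF gens_monoms] by auto
lemma Mx_le: "Mx \<le> n - 1" using mmax_le_bound[OF mmon mnz m_supp] .
lemma Mx_pos: "0 < m Mx" using mmax_props(2)[OF mmon mnz] .

lemma I_up: "a \<in> I \<Longrightarrow> b \<in> monoms n \<Longrightarrow> a \<le> b \<Longrightarrow> b \<in> I" using mideal_up by blast

lemma in_m_ideal: "a \<in> monoms n \<Longrightarrow> a \<in> mideal n {m} \<longleftrightarrow> m \<le> a"
  by (auto simp: mideal_def)

lemma I_sat: "a \<in> I \<Longrightarrow> a(n := 0) \<in> I"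
proof -
  assume a: "a \<in> I"
  then obtain s where s: "s \<in> gens" "s \<le> a" by (auto simp: mideal_def)
  have "s \<le> a(n := 0)" using s gens_supp[OF s(1), of n] qn by (auto simp: le_fun_def)
  moreover have "a(n := 0) \<in> monoms n" using a by (auto simp: mideal_def monoms_def)
  ultimately show ?thesis using s(1) by (auto simp: mideal_def)
qed

lemma mingen_dec: assumes "0 < m k" shows "m(k := m k - 1) \<notin> I"
proof
  assume "m(k := m k - 1) \<in> I"
  moreover have "m(k := m k - 1) \<le> m" by (auto simp: le_fun_def)
  moreover have "m(k := m k - 1) \<noteq> m" using assms by (metis fun_upd_same diff_less less_irrefl zero_less_one)
  ultimately show False using mM by (auto simp: mingens_def)
qed

lemma stI: "u \<in> I \<Longrightarrow> i < j \<Longrightarrow> 0 < u j \<Longrightarrow> u(j := u j - 1, i := u i + 1) \<in> I"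
  using stable_I unfolding stable_def by blast

lemma K1:
  assumes ij: "i < j" "j \<le> n" and mi: "0 < m i"
  shows "m(i := m i - 1, j := m j + 1) \<notin> I"
proof
  define u where "u = m(i := m i - 1, j := m j + 1)"
  assume "m(i := m i - 1, j := m j + 1) \<in> I"
  then have uI: "u \<in> I" by (simp add: u_def)
  show False
  proof (cases "j = n")
    case True
    have "u(n := 0) = m(i := m i - 1)" using True ij m_supp[of n] qn by (auto simp: u_def fun_eq_iff)
    then show False using I_sat[OF uI] mingen_dec[OF mi] by simp
  next
    case False
    then have jn: "j < n" using ij by simp
    define u' where "u' = m(i := m i - 1, Suc i := m (Suc i) + 1)"
    have u'I: "u' \<in> I"
    proof (cases "j = Suc i")
      case True then show ?thesis using uI by (simp add: u_def u'_def)
    next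
      case False
      then have sj: "Suc i < j" using ij by simp
      have "u(j := u j - 1, Suc i := u (Suc i) + 1) \<in> I" using stI[OF uI sj] by (simp add: u_def)
      moreover have "u(j := u j - 1, Suc i := u (Suc i) + 1) = u'"
        using sj by (auto simp: u_def u'_def fun_eq_iff)
      ultimately show ?thesis by simp
    qed
    have "u' \<in> M"
    proof -
      have "h = u'" if h: "h \<in> I" "h \<le> u'" for h
      proof (rule ccontr)
        assume "h \<noteq> u'"
        then obtain k where "h k \<noteq> u' k" by (auto simp: fun_eq_iff)
        then have hk: "h k < u' k" using h(2) by (metis le_fun_def order_le_neq_trans)
        have wm: "u'(k := u' k - 1) \<in> monoms n"
          using u'I by (auto simp: mideal_def monoms_def)
        have "h \<le> u'(k := u' k - 1)" using h(2) hk by (auto simp: le_fun_def)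
        then have wI: "u'(k := u' k - 1) \<in> I" using I_up[OF h(1) wm] by simp
        show False
        proof (cases "k = Suc i")
          case True
          have "u'(k := u' k - 1) = m(i := m i - 1)" using True by (auto simp: u'_def fun_eq_iff)
          then show False using wI mingen_dec[OF mi] by simp
        next
          case False
          define w where "w = u'(k := u' k - 1)"
          have "0 < w (Suc i)" using False by (simp add: w_def u'_def)
          then have "w(Suc i := w (Suc i) - 1, i := w i + 1) \<in> I" using stI[of w i "Suc i"] wI
            by (simp add: w_def)
          moreover have "w(Suc i := w (Suc i) - 1, i := w i + 1) = m(k := m k - 1)"
            using False hk mi by (auto simp: w_def u'_def fun_eq_iff split: if_splits)
          moreover have "0 < m k" using hk False by (auto simp: u'_def split: if_splits)
          ultimately show False using mingen_dec by simp
        qed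
      qed
      then show ?thesis using u'I by (auto simp: mingens_def)
    qed
    moreover have "i + 1 < n" using ij jn by simp
    ultimately show False using exm mi by (auto simp: expandable_def u'_def)
  qed
qed

lemma T_monoms: "T \<subseteq> monoms n"
  using mmon Mx_le by (auto simp: T_def mideal_def monoms_def)

lemma T_nz: "(\<lambda>_. 0) \<notin> T"
proof
  assume "(\<lambda>_. 0) \<in> T"
  then consider "(\<lambda>_. 0) \<in> I" | j where "(\<lambda>_. 0) = m(j := m j + 1)" by (auto simp: T_def)
  then show False
  proof cases
    case 1 then show False using nz_mideal[OF gens_nz] by auto
  next
    case 2 then show False using fun_cong[OF 2, of j] by simp
  qed
qed

lemma upcE: "upc n E" using upc_mideal[OF T_nz] .

lemma T_E: "T \<subseteq> E" using S_in_mideal[OF T_monoms] .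

lemma Eup:
  assumes "m \<le> a" "a \<in> monoms n" "m k < a k" "k < n"
  shows "a \<in> E"
proof (cases "Mx \<le> k")
  case True
  have "m(k := m k + 1) \<in> T" using True assms(4) by (auto simp: T_def)
  moreover have "m(k := m k + 1) \<le> a" using assms(1,3) by (auto simp: le_fun_def)
  ultimately show ?thesis using T_E mideal_up assms(2) by blast
next
  case False
  define b where "b = m(Mx := m Mx - 1, k := m k + 1)"
  have bI: "b \<in> I" using stI[OF mI _ Mx_pos, of k] False by (simp add: b_def)
  have bm: "b \<in> monoms n" using bI by (auto simp: mideal_def)
  have "\<not> m \<le> b" using False Mx_pos by (auto simp: b_def le_fun_def intro!: exI[of _ Mx])
  then have "b \<in> T" using bI bm in_m_ideal by (auto simp: T_def)
  moreover have "b \<le> a" using assms(1,3) False unfolding le_fun_def b_def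
    by (auto simp: le_fun_def) (metis diff_le_self le_trans)
  ultimately show ?thesis using T_E mideal_up assms(2) by blast
qed

lemma stable_E: "stable n E"
proof (rule stable_mideal[OF T_monoms])
  fix t i j assume t: "t \<in> T" and ij: "i < j" "0 < t j"
  have tm: "t \<in> monoms n" using t T_monoms by auto
  have jn: "j \<le> n" using monoms_supp[OF tm] ij(2) by simp
  define t' where "t' = t(j := t j - 1, i := t i + 1)"
  have t'm: "t' \<in> monoms n" using tm jn ij(1) by (auto simp: monoms_def t'_def)
  show "t(j := t j - 1, i := t i + 1) \<in> E"
    unfolding t'_def[symmetric]
  proof -
    from t consider (a) "t \<in> I" "t \<notin> mideal n {m}" | (b) k where "t = m(k := m k + 1)" "Mx \<le> k" "k \<le> n - 1"
      by (auto simp: T_def)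
    then show "t' \<in> E"
    proof cases
      case a
      have t'I: "t' \<in> I" using stI[OF a(1) ij] by (simp add: t'_def)
      have nmt: "\<not> m \<le> t" using a(2) in_m_ideal[OF tm] by simp
      show ?thesis
      proof (cases "m \<le> t'")
        case False
        then have "t' \<in> T" using t'I in_m_ideal[OF t'm] by (auto simp: T_def)
        then show ?thesis using T_E by auto
      next
        case True
        show ?thesis
        proof (cases "\<exists>k<n. m k < t' k")
          case True
          then obtain k where "k < n" "m k < t' k" by blast
          then show ?thesis using Eup[OF \<open>m \<le> t'\<close> t'm] by simp
        next
          case False
          then have eqk: "\<And>k. k < n \<Longrightarrow> t' k = m k" using True by (metis le_fun_def le_neq_implies_less)
          have "i < n" using ij jn by simp
          then have mi: "m i = t i + 1" using eqk[of i] ij(1) by (simp add: t'_def)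
          have tn: "t(n := 0) \<in> I" using I_sat a(1) by simp
          show ?thesis
          proof (cases "j = n")
            case True
            have "t(n := 0) = m(i := m i - 1)"
            proof
              fix p show "(t(n := 0)) p = (m(i := m i - 1)) p"
              proof (cases "p < n")
                case True then show ?thesis using eqk[of p] mi ij \<open>j = n\<close> by (auto simp: t'_def)
              next
                case False then show ?thesis using m_supp[of p] qn tm \<open>i < n\<close>
                  by (cases "p = n") (auto simp: monoms_def)
              qed
            qed
            then show ?thesis using tn mingen_dec[of i] mi by simp
          next
            case False
            then have jn': "j < n" using jn by simp
            have "t(n := 0) = m(i := m i - 1, j := m j + 1)"
            proof
              fix p show "(t(n := 0)) p = (m(i := m i - 1, j := m j + 1)) p"
              proof (cases "p < n")
                case True then show ?thesis using eqk[of p] mi ij jn' by (auto simp: t'_def)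
              next
                case False then show ?thesis using m_supp[of p] qn tm \<open>i < n\<close> jn'
                  by (cases "p = n") (auto simp: monoms_def)
              qed
            qed
            then show ?thesis using tn K1[OF ij(1) jn] mi by simp
          qed
        qed
      qed
    next
      case b
      show ?thesis
      proof (cases "j = k")
        case True
        have e: "t' = m(i := m i + 1)" using b True ij(1) by (auto simp: t'_def fun_eq_iff)
        have "m \<le> t'" by (auto simp: e le_fun_def)
        moreover have "m i < t' i" by (simp add: e)
        moreover have "i < n" using ij jn by simp
        ultimately show ?thesis using Eup t'm by blast
      next
        case False
        have mj: "0 < m j" using ij(2) b False by simp
        define bb where "bb = m(j := m j - 1, i := m i + 1)"
        have bI: "bb \<in> I" using stI[OF mI ij(1) mj] by (simp add: bb_def)
        have bm: "bb \<in> monoms n" using bI by (auto simp: mideal_def)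
        have "\<not> m \<le> bb" using mj ij(1) by (auto simp: bb_def le_fun_def intro!: exI[of _ j])
        then have "bb \<in> T" using bI bm in_m_ideal by (auto simp: T_def)
        moreover have "bb \<le> t'" using b False ij(1) by (auto simp: bb_def t'_def le_fun_def)
        ultimately show ?thesis using T_E mideal_up t'm by blast
      qed
    qed
  qed
qed

lemma mingensE_cases:
  assumes "g \<in> mingens E"
  shows "g \<in> M \<or> (\<exists>j. g = m(j := m j + 1) \<and> Mx \<le> j \<and> j \<le> n - 1)"
proof -
  have gT: "g \<in> T" using mingens_sub[OF T_monoms] assms by auto
  then consider (a) "g \<in> I" "g \<notin> mideal n {m}" | (b) j where "g = m(j := m j + 1)" "Mx \<le> j" "j \<le> n - 1"
    by (auto simp: T_def)
  then show ?thesis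
  proof cases
    case a
    have gm: "g \<in> monoms n" using a(1) by (auto simp: mideal_def)
    obtain s where s: "s \<in> gens" "s \<le> g" using a(1) by (auto simp: mideal_def)
    obtain h where h: "h \<in> gens" "h \<le> s" "\<forall>b\<in>gens. b \<le> h \<longrightarrow> h = b"
      using finite_has_minimal2[OF _ s(1)] by auto
    have hM: "h \<in> M" using h mingens_mideal[OF gens_monoms] by auto
    have hg: "h \<le> g" using h(2) s(2) by (rule order.trans)
    have "\<not> m \<le> h" using a(2) in_m_ideal[OF gm] hg order.trans by blast
    moreover have hm: "h \<in> monoms n" using h(1) gens_monoms by auto
    ultimately have "h \<in> T" using h(1) S_in_mideal[OF gens_monoms] in_m_ideal by (auto simp: T_def)
    then have "h \<in> E" using T_E by auto
    then have "h = g" using assms hg by (auto simp: mingens_def)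
    then show ?thesis using hM by simp
  qed auto
qed

lemma finite_mingensE: "finite (mingens E)"
proof -
  have "mingens E \<subseteq> M \<union> (\<lambda>j. m(j := m j + 1)) ` {..n}"
    using mingensE_cases by fastforce
  moreover have "finite M" using mingens_sub_gens finite_subset by blast
  ultimately show ?thesis by (meson finite_Un finite_imageI finite_atMost finite_subset)
qed

lemma bounds_E:
  assumes "g \<in> mingens E"
  shows "mdeg n g \<le> mdeg n F" "mmax n g \<le> n - 1"
proof -
  from mingensE_cases[OF assms] have "mdeg n g \<le> mdeg n F \<and> mmax n g \<le> n - 1"
  proof
    assume gM: "g \<in> M"
    have gg: "g \<in> gens" using gM mingens_sub_gens by auto
    have "mmax n g \<le> n - 1"
      using mmax_le_bound[of g n "n - 1"] gg gens_monoms gens_nz gens_supp by auto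
    then show ?thesis using deg_mingens_le[OF gM] by simp
  next
    assume "\<exists>j. g = m(j := m j + 1) \<and> Mx \<le> j \<and> j \<le> n - 1"
    then obtain j where j: "g = m(j := m j + 1)" "Mx \<le> j" "j \<le> n - 1" by blast
    have "mdeg n g = Suc (mdeg n m)" using mdeg_inc[of j n m] j qn by simp
    moreover have "mdeg n m < mdeg n F" using exp_deg_lt[OF exm mF] .
    moreover have "mmax n g \<le> n - 1"
    proof (rule mmax_le_bound)
      show "g \<in> monoms n" using j mmon qn by (auto simp: monoms_def)
      show "g \<noteq> (\<lambda>_. 0)" using j by (auto simp: fun_eq_iff intro!: exI[of _ j])
      show "\<And>p. n - 1 < p \<Longrightarrow> g p = 0" using j m_supp by auto
    qed
    ultimately show ?thesis by simp
  qed
  then show "mdeg n g \<le> mdeg n F" "mmax n g \<le> n - 1" by auto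
qed

lemma part_ii: "\<forall>g\<in>mingens (expansion n I m). mdeg n g < 1 + mdeg n F"
  using bounds_E(1) E_def' by fastforce

lemma Kpoly_E_coeff: "k \<ge> mdeg n F + n \<Longrightarrow> coeff (Kpoly n (expansion n I m)) k = 0"
proof -
  assume k: "k \<ge> mdeg n F + n"
  have "Kpoly n (expansion n I m) = Kp n (mingens E)"
    unfolding E_def' by (rule Kpoly_eq[OF upcE stable_E finite_mingensE])
  moreover have "coeff (Kp n (mingens E)) k = 0"
  proof (rule coeff_Kp_0[OF finite_mingensE])
    show "0 < k" using k qn by simp
    show "\<And>g. g \<in> mingens E \<Longrightarrow> mdeg n g + mmax n g < k"
      using bounds_E k qn by fastforce
  qed
  ultimately show ?thesis by simp
qed

lemma degree_Kpoly_E: "degree (Kpoly n (expansion n I m)) < mdeg n F + n"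
proof -
  have "degree (Kpoly n (expansion n I m)) \<le> mdeg n F + n - 1"
    by (rule degree_le) (use Kpoly_E_coeff in auto)
  then show ?thesis using qn by simp
qed

end

context lexc begin

lemma finite_M: "finite M" using mingens_sub_gens finite_subset by blast

lemma Kpoly_I_top:
  assumes cn: "0 < c (n - 1)"
  shows "mdeg n F + n - 1 \<le> degree (Kpoly n I)"
proof -
  have K: "Kpoly n I = Kp n M" by (rule Kpoly_eq[OF upcI stable_I finite_M])
  have mF: "mmax n F = n - 1"
    by (rule mmax_eq) (use cn qn in \<open>auto simp: F_val monoms_def\<close>)
  have "coeff (Kp n M) (mdeg n F + n - 1) \<noteq> 0"
  proof (rule coeff_Kp_top[OF finite_M _ F_mingen])
    show "0 < mdeg n F + n - 1" using deg_F_pos qn by simp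
    show "mdeg n F + mmax n F = mdeg n F + n - 1" using mF qn by simp
    show "\<And>g. g \<in> M \<Longrightarrow> g \<noteq> F \<Longrightarrow> mdeg n g + mmax n g < mdeg n F + n - 1"
    proof -
      fix g assume g: "g \<in> M" "g \<noteq> F"
      from g(1) consider (vv) j where "g = var j" "j < q" | (gg) w where "g = G w" "w \<in> V" | (f) "g = F"
        by (auto simp: mingens_I)
      then show "mdeg n g + mmax n g < mdeg n F + n - 1"
      proof cases
        case vv then show ?thesis using qn deg_F_pos by (simp add: mdeg_var mmax_var)
      next
        case gg
        then have w: "q \<le> w" "w < n - 1" by (auto simp: V_def)
        then show ?thesis using deg_mingens_le[OF g(1)] gg mmax_G[of w] by simp
      qed (use g in simp)
    qed
  qed
  then show ?thesis unfolding K by (rule le_degree)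
qed

end

theorem proposition6p6:
  fixes n d :: nat and e :: "nat \<Rightarrow> nat"
  assumes "d < n"
    and "\<forall>i<d. e (Suc i) \<le> e i"
    and "0 < e d"
  shows "(\<forall>m\<in>mingens (LexIdeal n d e).
            expandable n (LexIdeal n d e) m \<longleftrightarrow> smallest_of_degree n (LexIdeal n d e) m)
       \<and> (\<forall>m. expandable n (LexIdeal n d e) m \<and> m \<noteq> lastgen n d e \<longrightarrow>
            (\<forall>g\<in>mingens (expansion n (LexIdeal n d e) m).
                mdeg n g < 1 + mdeg n (lastgen n d e))
            \<and> degree (Kpoly n (expansion n (LexIdeal n d e) m))
                < degree (Kpoly n (LexIdeal n d (e(0 := e 0 + 1)))))"
proof -
  define q where "q = n - Suc d"
  define c where "c = (\<lambda>p. aa d e (n - Suc p))"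
  define e' where "e' = e(0 := e 0 + 1)"
  define c' where "c' = (\<lambda>p. aa d e' (n - Suc p))"
  have qn: "q < n" using assms(1) by (simp add: q_def)
  have nq: "n - Suc q = d" using assms(1) by (simp add: q_def)
  have cq: "0 < c q" using assms(3) by (simp add: c_def nq aa_def ee_def)
  interpret L: lexc n q c using qn cq by unfold_locales
  have c'q: "0 < c' q" using assms(3) by (simp add: c'_def nq aa_def ee_def e'_def)
  interpret L': lexc n q c' using qn c'q by unfold_locales
  have LI: "LexIdeal n d e = L.I" unfolding LexIdeal_def lexgens_eq[OF assms(1)] q_def c_def ..
  have LI': "LexIdeal n d (e(0 := e 0 + 1)) = L'.I"
    unfolding LexIdeal_def lexgens_eq[OF assms(1)] q_def c'_def e'_def ..
  have last: "lastgen n d e = L.F"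
  proof -
    have "filter (\<lambda>g. g \<in> mingens L.I) (LG n q c)
        = filter (\<lambda>g. g \<in> mingens L.I) (map var [0..<q] @ map (Gp q c) [q..<n - 1]) @ [L.F]"
      using L.F_mingen by (simp add: LG_def)
    then show ?thesis unfolding lastgen_def lexgens_eq[OF assms(1)] LI[symmetric]
      by (simp add: q_def c_def LexIdeal_def lexgens_eq[OF assms(1)])
  qed
  have e1: "ee d e' 1 = ee d e 1" by (simp add: ee_def e'_def)
  have e1le: "ee d e 1 \<le> e 0" using assms(2) by (cases d) (auto simp: ee_def)
  have cn1: "c' (n - 1) = c (n - 1) + 1"
    using qn e1 e1le by (auto simp: c'_def c_def aa_def ee_def e'_def split: if_splits)
  have cp: "c' p = c p" if "p < n - 1" for p
  proof -
    have "0 < n - Suc p" using that by simp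
    then obtain k where "n - Suc p = Suc k" by (metis gr0_implies_Suc)
    then show ?thesis by (simp add: c'_def c_def aa_def ee_def e'_def)
  qed
  have F': "L'.F = L.F(n - 1 := L.F (n - 1) + 1)"
    using cn1 cp qn by (auto simp: fun_eq_iff Fp_def)
  have degF': "mdeg n L'.F = mdeg n L.F + 1"
    using mdeg_inc[of "n - 1" n L.F] F' by simp
  have c'n: "0 < c' (n - 1)" using cn1 by simp
  have topI': "mdeg n L.F + n \<le> degree (Kpoly n L'.I)"
    using L'.Kpoly_I_top[OF c'n] degF' qn by simp
  show ?thesis
  proof
    show "\<forall>m\<in>mingens (LexIdeal n d e). expandable n (LexIdeal n d e) m \<longleftrightarrow> smallest_of_degree n (LexIdeal n d e) m"
      unfolding LI using L.part_i .
  next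
    show "\<forall>m. expandable n (LexIdeal n d e) m \<and> m \<noteq> lastgen n d e \<longrightarrow>
            (\<forall>g\<in>mingens (expansion n (LexIdeal n d e) m). mdeg n g < 1 + mdeg n (lastgen n d e))
            \<and> degree (Kpoly n (expansion n (LexIdeal n d e) m))
                < degree (Kpoly n (LexIdeal n d (e(0 := e 0 + 1))))"
    proof (intro allI impI)
      fix m assume h: "expandable n (LexIdeal n d e) m \<and> m \<noteq> lastgen n d e"
      interpret X: lexe n q c m using h qn cq unfolding LI last by unfold_locales auto
      show "(\<forall>g\<in>mingens (expansion n (LexIdeal n d e) m). mdeg n g < 1 + mdeg n (lastgen n d e))
            \<and> degree (Kpoly n (expansion n (LexIdeal n d e) m))
                < degree (Kpoly n (LexIdeal n d (e(0 := e 0 + 1))))"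
        unfolding LI LI' last using X.part_ii X.degree_Kpoly_E topI' by simp
    qed
  qed
qed

end
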